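(* Let $\mathbb{F}\in\{\mathbb{R},\mathbb{C}\}$ and let $r$ be a positive integer, with $r$ even if $\mathbb{F}=\mathbb{R}$. Let $m=2^r$ and let $\{\mathcal{B}_k\}_{k\in K}$ be a maximal collection of mutually unbiased bases for $\mathbb{F}^m$, so $|K|=k_{\mathbb{F}}(m)$. Then $$\mathcal{F}=\{P^{(k)}_{\mathcal{J}}: k\in K,\ \mathcal{J}\in\mathbb{S}_r\}$$ is a tight, maximal orthoplectic fusion frame, where $P^{(k)}_{\mathcal{J}}$ denotes the $\mathcal{J}$-coordinate projection with respect to $\mathcal{B}_k$.
   Context: Define $\{0,1\}$-matrices $S_r$ recursively: $S_1=I_2$; for $r\ge1$, $F_r=I_{2^r-1}\otimes\begin{pmatrix}0&1\\1&0\end{pmatrix}$, and $1_r$, $0_r$ are the $2^r\times1$ all-ones and all-zeros column vectors; for $r\ge2$, $S_r=\big(B_r^{(i)}\ B_r^{(ii)}\ B_r^{(iii)}\big)$ with $B_r^{(i)}=\begin{pmatrix}1_{r-1}&0_{r-1}\\0_{r-1}&1_{r-1}\end{pmatrix}$, $B_r^{(ii)}=\begin{pmatrix}S_{r-1}\\S_{r-1}\end{pmatrix}$, $B_r^{(iii)}=\begin{pmatrix}S_{r-1}\\S_{r-1}F_{r-1}\end{pmatrix}$. $S_r$ is $2^r\times(2^{r+1}-2)$, and $\mathbb{S}_r$ is the collection of blocks $\mathcal{J}_b=\{a:(S_r)_{a,b}=1\}\subset\{1,\dots,2^r\}$, one for each column $b$. Orthonormal bases $\{b_j\},\{b'_j\}$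 of $\mathbb{F}^m$ are mutually unbiased if $|\langle b_j,b'_{j'}\rangle|^2=1/m$ for all $j,j'$; a collection of pairwise mutually unbiased bases is maximal if it has $k_{\mathbb{F}}(m)$ elements, where $k_{\mathbb{R}}(m)=m/2+1$, $k_{\mathbb{C}}(m)=m+1$. The $\mathcal{J}$-coordinate projection with respect to $\{b_j\}$ is $\sum_{j\in\mathcal{J}}b_j\otimes b_j^*$. An $(n,l,m)$-fusion frame is a set $\{P_j\}_{j=1}^n$ of orthogonal projections onto $l$-dimensional subspaces of $\mathbb{F}^m$ with $A\|x\|^2\le\sum_j\|P_jx\|^2\le B\|x\|^2$ for some $0<A\le B$ and all $x$; it is tight if one can take $A=B$. Let $d_{\mathbb{F}}(m)=\frac{(m+2)(m-1)}{2}$ if $\mathbb{F}=\mathbb{R}$ and $m^2-1$ if $\mathbb{F}=\mathbb{C}$. A fusion frame is Grassmannian if it minimizes $\max_{j\ne k}\mathrm{tr}(P_jP_k)$ among all $(n,l,m)$-fusion frames; orthoplex-bound achieving if Grassmannian, $n>d_{\mathbb{F}}(m)+1$ and $\max_{j\ne k}\mathrm{tr}(P_jP_k)=l^2/m$; maximal orthoplectic if orthoplex-bound achieving with $n=2d_{\mathbb{F}}(m)$. *)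

theory Defs
  imports Complex_Main
begin

text \<open>The field F is represented as a subset of the complex numbers:
  the reals (when isreal holds) or all complex numbers.  Vectors of F^m are
  functions nat => complex with entries in F at indices below m and zero
  elsewhere (coordinates are 0-indexed); m x m matrices are functions
  nat => nat => complex.\<close>

definition fld :: "bool \<Rightarrow> complex set" where
  "fld isreal = (if isreal then \<real> else UNIV)"

definition fvec :: "complex set \<Rightarrow> nat \<Rightarrow> (nat \<Rightarrow> complex) \<Rightarrow> bool" where
  "fvec Fs m v \<longleftrightarrow> (\<forall>i<m. v i \<in> Fs) \<and> (\<forall>i\<ge>m. v i = 0)"

definition cinner :: "nat \<Rightarrow> (nat \<Rightarrow> complex) \<Rightarrow> (nat \<Rightarrow> complex) \<Rightarrow> complex" where
  "cinner m x y = (\<Sum>i<m. x i * cnj (y i))"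

definition vnorm2 :: "nat \<Rightarrow> (nat \<Rightarrow> complex) \<Rightarrow> real" where
  "vnorm2 m x = (\<Sum>i<m. (cmod (x i))\<^sup>2)"

definition mat_vec :: "nat \<Rightarrow> (nat \<Rightarrow> nat \<Rightarrow> complex) \<Rightarrow> (nat \<Rightarrow> complex) \<Rightarrow> (nat \<Rightarrow> complex)" where
  "mat_vec m P x = (\<lambda>i. if i < m then (\<Sum>i'<m. P i i' * x i') else 0)"

definition trprod :: "nat \<Rightarrow> (nat \<Rightarrow> nat \<Rightarrow> complex) \<Rightarrow> (nat \<Rightarrow> nat \<Rightarrow> complex) \<Rightarrow> real" where
  "trprod m P Q = Re (\<Sum>i<m. \<Sum>i'<m. P i i' * Q i' i)"

definition onb :: "complex set \<Rightarrow> nat \<Rightarrow> (nat \<Rightarrow> nat \<Rightarrow> complex) \<Rightarrow> bool" where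
  "onb Fs m b \<longleftrightarrow> (\<forall>j<m. fvec Fs m (b j)) \<and>
     (\<forall>j<m. \<forall>j'<m. cinner m (b j) (b j') = (if j = j' then 1 else 0))"

definition mutually_unbiased :: "nat \<Rightarrow> (nat \<Rightarrow> nat \<Rightarrow> complex) \<Rightarrow> (nat \<Rightarrow> nat \<Rightarrow> complex) \<Rightarrow> bool" where
  "mutually_unbiased m b b' \<longleftrightarrow>
     (\<forall>j<m. \<forall>j'<m. (cmod (cinner m (b j) (b' j')))\<^sup>2 = 1 / real m)"

definition kF :: "bool \<Rightarrow> nat \<Rightarrow> nat" where
  "kF isreal m = (if isreal then m div 2 + 1 else m + 1)"

definition maximal_mub :: "bool \<Rightarrow> nat \<Rightarrow> 'k set \<Rightarrow> ('k \<Rightarrow> nat \<Rightarrow> nat \<Rightarrow> complex) \<Rightarrow> bool" where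
  "maximal_mub isreal m K B \<longleftrightarrow>
     (\<forall>k\<in>K. onb (fld isreal) m (B k)) \<and>
     (\<forall>k\<in>K. \<forall>k'\<in>K. k \<noteq> k' \<longrightarrow> mutually_unbiased m (B k) (B k')) \<and>
     finite K \<and> card K = kF isreal m"

definition coord_proj :: "(nat \<Rightarrow> nat \<Rightarrow> complex) \<Rightarrow> nat set \<Rightarrow> nat \<Rightarrow> nat \<Rightarrow> complex" where
  "coord_proj b J = (\<lambda>i i'. \<Sum>j\<in>J. b j i * cnj (b j i'))"

text \<open>F_r = I_{2^r - 1} \<otimes> [[0,1],[1,0]], of size 2^(r+1) - 2.\<close>
definition Fmat :: "nat \<Rightarrow> nat \<Rightarrow> nat \<Rightarrow> nat" where
  "Fmat r t b = (if t < 2^(r+1) - 2 \<and> b < 2^(r+1) - 2 \<and> t div 2 = b div 2 \<and> t mod 2 \<noteq> b mod 2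
                 then 1 else 0)"

text \<open>Given S_{r'} (r' \<ge> 1), build S_{r'+1} = (B^(i) B^(ii) B^(iii)).
  Here h = 2^{r'} is the number of rows and c = 2^{r'+1} - 2 the number of
  columns of S_{r'}.\<close>
definition S_step :: "nat \<Rightarrow> (nat \<Rightarrow> nat \<Rightarrow> nat) \<Rightarrow> nat \<Rightarrow> nat \<Rightarrow> nat" where
  "S_step r' Sp = (\<lambda>a b.
     (let h = 2^r'; c = 2^(r'+1) - 2 in
      if a \<ge> 2 * h \<or> b \<ge> 2 + 2 * c then 0
      else if b = 0 then (if a < h then 1 else 0)
      else if b = 1 then (if a < h then 0 else 1)
      else if b < 2 + c then (if a < h then Sp a (b - 2) else Sp (a - h) (b - 2))
      else (if a < h then Sp a (b - 2 - c)
            else (\<Sum>t<c. Sp (a - h) t * Fmat r' t (b - 2 - c)))))"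

primrec Smat :: "nat \<Rightarrow> nat \<Rightarrow> nat \<Rightarrow> nat" where
  "Smat 0 = (\<lambda>a b. 0)"
| "Smat (Suc r') = (if r' = 0 then (\<lambda>a b. if a < 2 \<and> b < 2 \<and> a = b then 1 else 0)
                    else S_step r' (Smat r'))"

text \<open>Block J_b of S_r (column b, 0-indexed).\<close>
definition Sblock :: "nat \<Rightarrow> nat \<Rightarrow> nat set" where
  "Sblock r b = {a. a < 2^r \<and> Smat r a b = 1}"

definition is_proj :: "complex set \<Rightarrow> nat \<Rightarrow> nat \<Rightarrow> (nat \<Rightarrow> nat \<Rightarrow> complex) \<Rightarrow> bool" where
  "is_proj Fs m l P \<longleftrightarrow> (\<exists>u. (\<forall>s<l. fvec Fs m (u s)) \<and>
      (\<forall>s<l. \<forall>s'<l. cinner m (u s) (u s') = (if s = s' then 1 else 0)) \<and>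
      P = (\<lambda>i i'. \<Sum>s<l. u s i * cnj (u s i')))"

definition fusion_frame :: "complex set \<Rightarrow> nat \<Rightarrow> nat \<Rightarrow> 'i set \<Rightarrow> ('i \<Rightarrow> nat \<Rightarrow> nat \<Rightarrow> complex) \<Rightarrow> bool" where
  "fusion_frame Fs m l I P \<longleftrightarrow> finite I \<and> (\<forall>j\<in>I. is_proj Fs m l (P j)) \<and>
     (\<exists>A B. 0 < A \<and> A \<le> B \<and> (\<forall>x. fvec Fs m x \<longrightarrow>
        A * vnorm2 m x \<le> (\<Sum>j\<in>I. vnorm2 m (mat_vec m (P j) x)) \<and>
        (\<Sum>j\<in>I. vnorm2 m (mat_vec m (P j) x)) \<le> B * vnorm2 m x))"

definition tight_fusion_frame :: "complex set \<Rightarrow> nat \<Rightarrow> nat \<Rightarrow> 'i set \<Rightarrow> ('i \<Rightarrow> nat \<Rightarrow> nat \<Rightarrow> complex) \<Rightarrow> bool" where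
  "tight_fusion_frame Fs m l I P \<longleftrightarrow> finite I \<and> (\<forall>j\<in>I. is_proj Fs m l (P j)) \<and>
     (\<exists>A. 0 < A \<and> (\<forall>x. fvec Fs m x \<longrightarrow>
        (\<Sum>j\<in>I. vnorm2 m (mat_vec m (P j) x)) = A * vnorm2 m x))"

definition max_corr :: "nat \<Rightarrow> 'i set \<Rightarrow> ('i \<Rightarrow> nat \<Rightarrow> nat \<Rightarrow> complex) \<Rightarrow> real" where
  "max_corr m I P = Max {trprod m (P j) (P k) | j k. j \<in> I \<and> k \<in> I \<and> j \<noteq> k}"

text \<open>Grassmannian: minimal max_{j \<noteq> k} tr(P_j P_k) among all (n,l,m)-fusion frames
  (compared with all fusion frames indexed by {..<n}).\<close>
definition grassmannian :: "complex set \<Rightarrow> nat \<Rightarrow> nat \<Rightarrow> 'i set \<Rightarrow> ('i \<Rightarrow> nat \<Rightarrow> nat \<Rightarrow> complex) \<Rightarrow> bool" where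
  "grassmannian Fs m l I P \<longleftrightarrow> fusion_frame Fs m l I P \<and>
     (\<forall>Q. fusion_frame Fs m l {..<card I} Q \<longrightarrow> max_corr m I P \<le> max_corr m {..<card I} Q)"

definition dF :: "bool \<Rightarrow> nat \<Rightarrow> nat" where
  "dF isreal m = (if isreal then (m + 2) * (m - 1) div 2 else m^2 - 1)"

definition orthoplex_bound_achieving :: "bool \<Rightarrow> nat \<Rightarrow> nat \<Rightarrow> 'i set \<Rightarrow> ('i \<Rightarrow> nat \<Rightarrow> nat \<Rightarrow> complex) \<Rightarrow> bool" where
  "orthoplex_bound_achieving isreal m l I P \<longleftrightarrow> grassmannian (fld isreal) m l I P \<and>
     card I > dF isreal m + 1 \<and> max_corr m I P = real l ^ 2 / real m"

definition maximal_orthoplectic :: "bool \<Rightarrow> nat \<Rightarrow> nat \<Rightarrow> 'i set \<Rightarrow> ('i \<Rightarrow> nat \<Rightarrow> nat \<Rightarrow> complex) \<Rightarrow> bool" where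
  "maximal_orthoplectic isreal m l I P \<longleftrightarrow> orthoplex_bound_achieving isreal m l I P \<and>
     card I = 2 * dF isreal m"

end

theory Submission
  imports Defs "HOL-Library.Function_Algebras"
begin

lemma sum_fun_apply: "(\<Sum>x\<in>A. f x) i = (\<Sum>x\<in>A. f x i)"
  by (induction A rule: infinite_finite_induct) auto

lemma orth_independent:
  fixes s :: "'a::field \<Rightarrow> 'b::ab_group_add \<Rightarrow> 'b" and G :: "'b \<Rightarrow> 'b \<Rightarrow> 'a"
  assumes vs: "vector_space s"
    and Gadd: "\<And>x y z. G (x + y) z = G x z + G y z"
    and Gscale: "\<And>c x z. G (s c x) z = c * G x z"
    and orth: "\<And>x y. x \<in> S \<Longrightarrow> y \<in> S \<Longrightarrow> x \<noteq> y \<Longrightarrow> G x y = 0"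
    and nz: "\<And>x. x \<in> S \<Longrightarrow> G x x \<noteq> 0"
  shows "\<not> module.dependent s S"
proof
  interpret v: vector_space s by (rule vs)
  have G0: "G 0 z = 0" for z using Gscale[of 0 0 z] by simp
  have Gsum: "G (\<Sum>x\<in>t. f x) z = (\<Sum>x\<in>t. G (f x) z)" for t f z
    by (induction t rule: infinite_finite_induct) (auto simp: G0 Gadd)
  assume "v.dependent S"
  then obtain t u where t: "finite t" "t \<subseteq> S" "(\<Sum>x\<in>t. s (u x) x) = 0" and "\<exists>x\<in>t. u x \<noteq> 0"
    unfolding v.dependent_explicit by blast
  then obtain y where y: "y \<in> t" "u y \<noteq> 0" by blast
  have "0 = G (\<Sum>x\<in>t. s (u x) x) y" using t G0 by simp
  also have "\<dots> = (\<Sum>x\<in>t. u x * G x y)" by (simp add: Gsum Gscale)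
  also have "\<dots> = u y * G y y"
    using t y orth by (subst sum.remove[OF t(1) y(1)]) (auto intro!: sum.neutral; blast)
  finally show False using y nz t by auto
qed

lemma obtuse_bound:
  fixes s :: "real \<Rightarrow> 'b::ab_group_add \<Rightarrow> 'b" and F :: "'b \<Rightarrow> 'b \<Rightarrow> real"
    and v :: "nat \<Rightarrow> 'b"
  assumes vs: "vector_space s"
    and Fadd: "\<And>x y z. F (x + y) z = F x z + F y z"
    and Fscale: "\<And>c x z. F (s c x) z = c * F x z"
    and Fsym: "\<And>x y. F x y = F y x"
    and Fpos: "\<And>x. F x x \<ge> 0"
    and Fzero: "\<And>x y. F x x = 0 \<Longrightarrow> F x y = 0"
    and T: "finite T"
    and vT: "\<And>j. j < N \<Longrightarrow> v j \<in> module.span s T"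
    and u0T: "ezero \<in> module.span s T"
    and vu0: "\<And>j. j < N \<Longrightarrow> F (v j) ezero = 0"
    and u0pos: "F ezero ezero > 0"
    and neg: "\<And>j k. j < N \<Longrightarrow> k < N \<Longrightarrow> j \<noteq> k \<Longrightarrow> F (v j) (v k) < 0"
    and N: "N \<ge> card T + 1"
  shows False
proof -
  interpret v: vector_space s by (rule vs)
  have F0: "F 0 z = 0" for z using Fadd[of 0 0 z] by simp
  have Fsum: "F (\<Sum>x\<in>t. f x) z = (\<Sum>x\<in>t. F (f x) z)" for t f z
    by (induction t rule: infinite_finite_induct) (auto simp: F0 Fadd)
  have Fsum': "F z (\<Sum>x\<in>t. f x) = (\<Sum>x\<in>t. F z (f x))" for t f z
    using Fsum by (simp add: Fsym)
  define L where "L = N - 1"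
  have LN: "L < N" using N unfolding L_def by simp
  have injv: "inj_on v {..<N}"
  proof (rule inj_onI)
    fix j k assume "j \<in> {..<N}" "k \<in> {..<N}" "v j = v k"
    then show "j = k" using neg[of j k] Fpos[of "v j"] by force
  qed
  define S where "S = v ` {..<L} \<union> {ezero}"
  have u0nv: "ezero \<notin> v ` {..<N}"
    using vu0 u0pos by force
  have cardS: "card S = N"
  proof -
    have "card (v ` {..<L}) = L"
      using injv LN by (subst card_image) (auto intro: inj_on_subset)
    moreover have "ezero \<notin> v ` {..<L}" using u0nv LN by auto
    ultimately show ?thesis unfolding S_def using N L_def by simp
  qed
  have "S \<subseteq> v.span T" unfolding S_def using vT u0T LN by auto
  hence "v.dependent S"
    using v.independent_span_bound[OF T, of S] cardS N by auto
  then obtain t c where t: "finite t" "t \<subseteq> S" "(\<Sum>x\<in>t. s (c x) x) = 0" and ex: "\<exists>x\<in>t. c x \<noteq> 0"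
    unfolding v.dependent_explicit by blast
  have tv: "x \<in> t \<Longrightarrow> x \<noteq> ezero \<Longrightarrow> \<exists>j<L. x = v j" for x using t(2) unfolding S_def by auto
  have key: "{x\<in>t. x \<noteq> ezero \<and> d x > 0} = {}" if dt: "(\<Sum>x\<in>t. s (d x) x) = 0" for d
  proof (rule ccontr)
    define P where "P = {x\<in>t. x \<noteq> ezero \<and> d x > 0}"
    define Q where "Q = {x\<in>t. x \<noteq> ezero \<and> d x < 0}"
    define Z where "Z = {x\<in>t. x \<noteq> ezero \<and> d x = 0}"
    define U where "U = t \<inter> {ezero}"
    assume Pne: "P \<noteq> {}"
    have fins: "finite P" "finite Q" "finite Z" "finite U" using t(1) unfolding P_def Q_def Z_def U_def by auto
    have tdec: "t = P \<union> Q \<union> Z \<union> U" unfolding P_def Q_def Z_def U_def by auto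
    have rel: "(\<Sum>x\<in>t. d x * F x y) = 0" for y
    proof -
      have "(\<Sum>x\<in>t. d x * F x y) = F (\<Sum>x\<in>t. s (d x) x) y" by (simp add: Fsum Fscale)
      thus ?thesis using dt F0 by simp
    qed
    have split: "(\<Sum>x\<in>t. d x * F x y) = (\<Sum>x\<in>P. d x * F x y) + (\<Sum>x\<in>Q. d x * F x y)
         + (\<Sum>x\<in>Z. d x * F x y) + (\<Sum>x\<in>U. d x * F x y)" for y
    proof -
      have "(\<Sum>x\<in>t. d x * F x y) = (\<Sum>x\<in>P \<union> Q \<union> Z \<union> U. d x * F x y)" using tdec by simp
      also have "\<dots> = (\<Sum>x\<in>P \<union> Q \<union> Z. d x * F x y) + (\<Sum>x\<in>U. d x * F x y)"
        by (rule sum.union_disjoint) (use fins in \<open>auto simp: P_def Q_def Z_def U_def\<close>)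
      also have "(\<Sum>x\<in>P \<union> Q \<union> Z. d x * F x y) = (\<Sum>x\<in>P \<union> Q. d x * F x y) + (\<Sum>x\<in>Z. d x * F x y)"
        by (rule sum.union_disjoint) (use fins in \<open>auto simp: P_def Q_def Z_def U_def\<close>)
      also have "(\<Sum>x\<in>P \<union> Q. d x * F x y) = (\<Sum>x\<in>P. d x * F x y) + (\<Sum>x\<in>Q. d x * F x y)"
        by (rule sum.union_disjoint) (use fins in \<open>auto simp: P_def Q_def Z_def U_def\<close>)
      finally show ?thesis .
    qed
    have Z0: "(\<Sum>x\<in>Z. d x * F x y) = 0" for y unfolding Z_def by simp
    have U0: "(\<Sum>x\<in>U. d x * F x y) = 0" if "y = v j" "j < N" for y j
      unfolding U_def using vu0[of j] that by (auto simp: Fsym)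
    have PQ: "(\<Sum>x\<in>P. d x * F x y) = - (\<Sum>x\<in>Q. d x * F x y)" if "y = v j" "j < N" for y j
      using rel[of y] split[of y] Z0[of y] U0[OF that] by simp
    define w where "w = (\<Sum>x\<in>P. s (d x) x)"
    have Fwy: "F w y = (\<Sum>x\<in>P. d x * F x y)" for y unfolding w_def by (simp add: Fsum Fscale)
    have "F w w = (\<Sum>p\<in>P. d p * F w p)" using Fwy[of w] by (simp add: Fsym)
    also have "\<dots> = (\<Sum>p\<in>P. d p * (- (\<Sum>q\<in>Q. d q * F q p)))"
    proof (rule sum.cong[OF refl])
      fix p assume "p \<in> P"
      then obtain j where "j < L" "p = v j" using tv unfolding P_def by blast
      then show "d p * F w p = d p * (- (\<Sum>q\<in>Q. d q * F q p))"
        using Fwy[of p] PQ[of p j] LN by simp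
    qed
    also have "\<dots> \<le> 0"
    proof (rule sum_nonpos)
      fix p assume pP: "p \<in> P"
      have "(\<Sum>q\<in>Q. d q * F q p) \<ge> 0"
      proof (rule sum_nonneg)
        fix q assume qQ: "q \<in> Q"
        obtain j where j: "j < L" "p = v j" using tv pP unfolding P_def by blast
        obtain k where k: "k < L" "q = v k" using tv qQ unfolding Q_def by blast
        have "p \<noteq> q" using pP qQ unfolding P_def Q_def by auto
        hence "j \<noteq> k" using j k by auto
        hence "F q p < 0" using neg[of k j] j k LN by auto
        moreover have "d q < 0" using qQ unfolding Q_def by auto
        ultimately show "d q * F q p \<ge> 0" by (simp add: mult_nonpos_nonpos)
      qed
      moreover have "d p > 0" using pP unfolding P_def by auto
      ultimately show "d p * (- (\<Sum>q\<in>Q. d q * F q p)) \<le> 0"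
        by (simp add: mult_nonneg_nonpos)
    qed
    finally have "F w w = 0" using Fpos[of w] by linarith
    hence "F w (v L) = 0" by (rule Fzero)
    hence "(\<Sum>x\<in>P. d x * F x (v L)) = 0" using Fwy by simp
    moreover have "(\<Sum>x\<in>P. - (d x * F x (v L))) > 0"
    proof (rule sum_pos[OF fins(1) Pne])
      fix p assume pP: "p \<in> P"
      obtain j where j: "j < L" "p = v j" using tv pP unfolding P_def by blast
      have "F p (v L) < 0" using neg[of j L] j LN by auto
      moreover have "d p > 0" using pP unfolding P_def by auto
      ultimately show "- (d p * F p (v L)) > 0" by (simp add: mult_pos_neg)
    qed
    ultimately show False by (simp add: sum_negf)
  qed
  have k1: "{x\<in>t. x \<noteq> ezero \<and> c x > 0} = {}" using key[of c] t(3) by simp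
  have "(\<Sum>x\<in>t. s (- c x) x) = - (\<Sum>x\<in>t. s (c x) x)"
    by (simp add: v.scale_minus_left sum_negf)
  hence k2: "{x\<in>t. x \<noteq> ezero \<and> - c x > 0} = {}" using key[of "\<lambda>x. - c x"] t(3) by simp
  have cz: "x \<in> t \<Longrightarrow> x \<noteq> ezero \<Longrightarrow> c x = 0" for x using k1 k2 by force
  obtain y where y: "y \<in> t" "c y \<noteq> 0" using ex by blast
  hence yu: "y = ezero" using cz by blast
  have "(\<Sum>x\<in>t. s (c x) x) = s (c ezero) ezero"
    using t(1) y yu cz by (subst sum.remove[OF t(1) y(1)]) (auto intro!: sum.neutral)
  hence "s (c ezero) ezero = 0" using t(3) by simp
  hence "ezero = 0" using y yu v.scale_eq_0_iff by auto
  thus False using u0pos F0 by simp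
qed

lemma cinner_swap: "cinner m y x = cnj (cinner m x y)"
  unfolding cinner_def by (simp add: mult.commute)

lemma norm_comb:
  fixes b :: "nat \<Rightarrow> nat \<Rightarrow> complex"
  assumes J: "finite J" and orth: "\<And>j j'. j \<in> J \<Longrightarrow> j' \<in> J \<Longrightarrow> cinner m (b j) (b j') = (if j = j' then 1 else 0)"
  shows "(\<Sum>i<m. (cmod (\<Sum>j\<in>J. c j * b j i))\<^sup>2) = (\<Sum>j\<in>J. (cmod (c j))\<^sup>2)"
proof -
  have e1: "(\<Sum>j\<in>J. c j * b j i) * cnj (\<Sum>j'\<in>J. c j' * b j' i) = (\<Sum>j\<in>J. \<Sum>j'\<in>J. c j * cnj (c j') * (b j i * cnj (b j' i)))" for i
    by (simp only: cnj_sum sum_product complex_cnj_mult) (simp only: mult_ac)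
  have "complex_of_real (\<Sum>i<m. (cmod (\<Sum>j\<in>J. c j * b j i))\<^sup>2)
      = (\<Sum>i<m. (\<Sum>j\<in>J. c j * b j i) * cnj (\<Sum>j'\<in>J. c j' * b j' i))"
    by (simp only: of_real_sum complex_norm_square)
  also have "\<dots> = (\<Sum>i<m. \<Sum>j\<in>J. \<Sum>j'\<in>J. c j * cnj (c j') * (b j i * cnj (b j' i)))"
    by (simp only: e1)
  also have "\<dots> = (\<Sum>j\<in>J. \<Sum>j'\<in>J. \<Sum>i<m. c j * cnj (c j') * (b j i * cnj (b j' i)))"
    by (subst sum.swap, rule sum.cong[OF refl], subst sum.swap, rule refl)
  also have "\<dots> = (\<Sum>j\<in>J. \<Sum>j'\<in>J. c j * cnj (c j') * cinner m (b j) (b j'))"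
    unfolding cinner_def by (simp only: sum_distrib_left)
  also have "\<dots> = (\<Sum>j\<in>J. c j * cnj (c j))"
  proof (rule sum.cong[OF refl])
    fix j assume j: "j \<in> J"
    have "(\<Sum>j'\<in>J. c j * cnj (c j') * cinner m (b j) (b j')) = (\<Sum>j'\<in>J. if j' = j then c j * cnj (c j') else 0)"
      using j by (intro sum.cong) (auto simp: orth)
    also have "\<dots> = c j * cnj (c j)" using J j by simp
    finally show "(\<Sum>j'\<in>J. c j * cnj (c j') * cinner m (b j) (b j')) = c j * cnj (c j)" .
  qed
  also have "\<dots> = complex_of_real (\<Sum>j\<in>J. (cmod (c j))\<^sup>2)"
    by (simp only: of_real_sum complex_norm_square)
  finally show ?thesis by (simp only: of_real_eq_iff)
qed

lemma proj_mat_vec: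
  "mat_vec m (coord_proj b J) x = (\<lambda>i. if i < m then (\<Sum>j\<in>J. cinner m x (b j) * b j i) else 0)"
proof (rule ext)
  fix i
  have "(\<Sum>i'<m. (\<Sum>j\<in>J. b j i * cnj (b j i')) * x i') = (\<Sum>i'<m. \<Sum>j\<in>J. b j i * cnj (b j i') * x i')"
    by (simp only: sum_distrib_right)
  also have "\<dots> = (\<Sum>j\<in>J. \<Sum>i'<m. b j i * cnj (b j i') * x i')" by (rule sum.swap)
  also have "\<dots> = (\<Sum>j\<in>J. (\<Sum>i'<m. x i' * cnj (b j i')) * b j i)"
    by (simp only: sum_distrib_right) (simp only: mult_ac)
  finally show "mat_vec m (coord_proj b J) x i = (if i < m then (\<Sum>j\<in>J. cinner m x (b j) * b j i) else 0)"
    unfolding mat_vec_def coord_proj_def cinner_def by simp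
qed

lemma proj_norm:
  assumes J: "finite J" and orth: "\<And>j j'. j \<in> J \<Longrightarrow> j' \<in> J \<Longrightarrow> cinner m (b j) (b j') = (if j = j' then 1 else 0)"
  shows "vnorm2 m (mat_vec m (coord_proj b J) x) = (\<Sum>j\<in>J. (cmod (cinner m x (b j)))\<^sup>2)"
  unfolding vnorm2_def proj_mat_vec using norm_comb[OF J orth, of "\<lambda>j. cinner m x (b j)"]
  by simp

lemma trprod_proj:
  shows "trprod m (coord_proj b J) (coord_proj b' J') = (\<Sum>j\<in>J. \<Sum>j'\<in>J'. (cmod (cinner m (b j) (b' j')))\<^sup>2)"
proof -
  have e1: "coord_proj b J i i' * coord_proj b' J' i' i = (\<Sum>j\<in>J. \<Sum>j'\<in>J'. (b j i * cnj (b' j' i)) * (b' j' i' * cnj (b j i')))" for i i'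
    unfolding coord_proj_def by (simp only: sum_product) (simp only: mult_ac)
  have "(\<Sum>i<m. \<Sum>i'<m. coord_proj b J i i' * coord_proj b' J' i' i)
      = (\<Sum>i<m. \<Sum>i'<m. \<Sum>j\<in>J. \<Sum>j'\<in>J'. (b j i * cnj (b' j' i)) * (b' j' i' * cnj (b j i')))"
    by (simp only: e1)
  also have "\<dots> = (\<Sum>i<m. \<Sum>j\<in>J. \<Sum>j'\<in>J'. \<Sum>i'<m. (b j i * cnj (b' j' i)) * (b' j' i' * cnj (b j i')))"
    by (rule sum.cong[OF refl], subst sum.swap, rule sum.cong[OF refl], subst sum.swap, rule refl)
  also have "\<dots> = (\<Sum>j\<in>J. \<Sum>j'\<in>J'. \<Sum>i<m. \<Sum>i'<m. (b j i * cnj (b' j' i)) * (b' j' i' * cnj (b j i')))"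
    by (subst sum.swap, rule sum.cong[OF refl], subst sum.swap, rule refl)
  also have "\<dots> = (\<Sum>j\<in>J. \<Sum>j'\<in>J'. cinner m (b j) (b' j') * cinner m (b' j') (b j))"
    unfolding cinner_def by (simp only: sum_product)
  also have "\<dots> = (\<Sum>j\<in>J. \<Sum>j'\<in>J'. complex_of_real ((cmod (cinner m (b j) (b' j')))\<^sup>2))"
    by (simp only: complex_norm_square cinner_swap[of m "b' _" "b _"])
  finally show ?thesis unfolding trprod_def by (simp only: of_real_sum[symmetric] Re_complex_of_real)
qed

lemma onb_support: "onb Fs m b \<Longrightarrow> j < m \<Longrightarrow> i \<ge> m \<Longrightarrow> b j i = 0"
  unfolding onb_def fvec_def by auto

lemma proj_is_proj:
  assumes b: "onb Fs m b" and J: "J \<subseteq> {..<m}"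
  shows "is_proj Fs m (card J) (coord_proj b J)"
proof -
  have fJ: "finite J" using J finite_subset by blast
  define xs where "xs = sorted_list_of_set J"
  have d: "distinct xs" and sx: "set xs = J" and lx: "length xs = card J"
    using fJ unfolding xs_def by auto
  have bij: "bij_betw ((!) xs) {..<card J} J" using bij_betw_nth[OF d] sx lx by auto
  have fv: "\<forall>j<m. fvec Fs m (b j)" and orth: "\<forall>j<m. \<forall>j'<m. cinner m (b j) (b j') = (if j = j' then 1 else 0)"
    using b unfolding onb_def by blast+
  have inJ: "s < card J \<Longrightarrow> xs ! s < m" for s
  proof -
    assume "s < card J"
    hence "xs ! s \<in> J" using sx lx nth_mem by metis
    thus ?thesis using J by blast
  qed
  show ?thesis unfolding is_proj_def
  proof (intro exI[of _ "\<lambda>s. b (xs ! s)"] conjI allI impI)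
    fix s assume "s < card J"
    thus "fvec Fs m (b (xs ! s))" using fv inJ by blast
  next
    fix s s' assume s: "s < card J" "s' < card J"
    have "xs ! s = xs ! s' \<longleftrightarrow> s = s'" using d s lx by (simp add: nth_eq_iff_index_eq)
    thus "cinner m (b (xs ! s)) (b (xs ! s')) = (if s = s' then 1 else 0)"
      using orth inJ[OF s(1)] inJ[OF s(2)] by presburger
  next
    show "coord_proj b J = (\<lambda>i i'. \<Sum>s<card J. b (xs ! s) i * cnj (b (xs ! s) i'))"
    proof (intro ext)
      fix i i'
      show "coord_proj b J i i' = (\<Sum>s<card J. b (xs ! s) i * cnj (b (xs ! s) i'))"
        unfolding coord_proj_def
        by (rule sum.reindex_bij_betw[OF bij, of "\<lambda>j. b j i * cnj (b j i')", symmetric])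
    qed
  qed
qed

definition cscale :: "complex \<Rightarrow> (nat \<Rightarrow> complex) \<Rightarrow> (nat \<Rightarrow> complex)" where
  "cscale c v = (\<lambda>i. c * v i)"

interpretation cvs: vector_space cscale
  by unfold_locales (auto simp: cscale_def ring_distribs fun_eq_iff)

lemma cinner_add: "cinner m (x + y) z = cinner m x z + cinner m y z"
  unfolding cinner_def by (simp add: ring_distribs sum.distrib)

lemma cinner_cscale: "cinner m (cscale c x) z = c * cinner m x z"
  unfolding cinner_def cscale_def by (simp add: sum_distrib_left mult_ac)

lemma cinner_self: "cinner m y y = complex_of_real (\<Sum>i<m. (cmod (y i))\<^sup>2)"
  unfolding cinner_def by (simp only: of_real_sum complex_norm_square)

lemma supported_in_span:
  assumes "\<forall>i\<ge>m. v i = 0"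
  shows "v \<in> cvs.span ((\<lambda>i. (\<lambda>k. if k = i then 1 else 0)) ` {..<m})"
proof -
  have "v = (\<Sum>i<m. cscale (v i) (\<lambda>k. if k = i then 1 else 0))"
  proof (rule ext)
    fix k
    have "(\<Sum>i<m. cscale (v i) (\<lambda>k. if k = i then 1 else 0)) k = (\<Sum>i<m. if i = k then v i else 0)"
      unfolding sum_fun_apply cscale_def by (intro sum.cong) auto
    also have "\<dots> = v k" using assms by (cases "k < m") auto
    finally show "v k = (\<Sum>i<m. cscale (v i) (\<lambda>k. if k = i then 1 else 0)) k" by simp
  qed
  also have "\<dots> \<in> cvs.span ((\<lambda>i. (\<lambda>k. if k = i then 1 else 0)) ` {..<m})"
    by (intro cvs.span_sum cvs.span_scale cvs.span_base) auto
  finally show ?thesis .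
qed

lemma parseval:
  assumes b: "onb Fs m b" and x: "\<forall>i\<ge>m. x i = 0"
  shows "(\<Sum>j<m. (cmod (cinner m x (b j)))\<^sup>2) = vnorm2 m x"
proof -
  have fv: "\<forall>j<m. fvec Fs m (b j)" and orth: "\<forall>j<m. \<forall>j'<m. cinner m (b j) (b j') = (if j = j' then 1 else 0)"
    using b unfolding onb_def by blast+
  have bsup: "j < m \<Longrightarrow> i \<ge> m \<Longrightarrow> b j i = 0" for i j using fv unfolding fvec_def by blast
  define c where "c j = cinner m x (b j)" for j
  define y where "y = (\<lambda>i. x i - (\<Sum>j<m. c j * b j i))"
  have ysup: "\<forall>i\<ge>m. y i = 0" unfolding y_def using x bsup by simp
  have yorth: "cinner m y (b k) = 0" if k: "k < m" for k
  proof -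
    have "cinner m y (b k) = cinner m x (b k) - (\<Sum>i<m. \<Sum>j<m. c j * (b j i * cnj (b k i)))"
      unfolding y_def cinner_def by (simp add: right_diff_distrib sum_subtractf sum_distrib_left mult_ac)
    also have "(\<Sum>i<m. \<Sum>j<m. c j * (b j i * cnj (b k i))) = (\<Sum>j<m. c j * cinner m (b j) (b k))"
      unfolding cinner_def by (subst sum.swap) (simp add: sum_distrib_left)
    also have "\<dots> = (\<Sum>j<m. if j = k then c j else 0)"
      using orth k by (intro sum.cong) auto
    also have "\<dots> = c k" using k by simp
    finally show ?thesis unfolding c_def by simp
  qed
  have y0: "y = (\<lambda>i. 0)"
  proof (rule ccontr)
    assume yne: "y \<noteq> (\<lambda>i. 0)"
    then obtain i0 where "y i0 \<noteq> 0" by auto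
    with ysup have i0: "i0 < m" "y i0 \<noteq> 0" by (metis not_le)+
    have "(\<Sum>i<m. (cmod (y i))\<^sup>2) > 0"
      by (rule sum_pos2[of _ i0]) (use i0 in auto)
    hence yy: "cinner m y y \<noteq> 0" unfolding cinner_self by (simp only: of_real_eq_0_iff)
    define E where "E = (\<lambda>i. (\<lambda>k. if k = i then (1::complex) else 0)) ` {..<m}"
    define S where "S = b ` {..<m} \<union> {y}"
    have indep: "\<not> cvs.dependent S"
    proof (rule orth_independent[OF cvs.vector_space_axioms, of "cinner m"])
      show "cinner m (x + y) z = cinner m x z + cinner m y z" for x y z by (rule cinner_add)
      show "cinner m (cscale c x) z = c * cinner m x z" for c x z by (rule cinner_cscale)
      fix u w assume "u \<in> S" "w \<in> S" "u \<noteq> w"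
      then show "cinner m u w = 0" unfolding S_def using orth yorth
        by (auto simp: cinner_swap[of m _ y])
    next
      fix u assume "u \<in> S" then show "cinner m u u \<noteq> 0" unfolding S_def using orth yy by auto
    qed
    have "S \<subseteq> cvs.span E"
      unfolding S_def E_def using supported_in_span[of m] ysup bsup by auto
    hence "card S \<le> card E" using cvs.independent_span_bound[of E S] indep unfolding E_def by auto
    also have "card E \<le> m" unfolding E_def using card_image_le[of "{..<m}"] by auto
    finally have cS: "card S \<le> m" .
    have injb: "inj_on b {..<m}"
      by (rule inj_onI) (use orth in \<open>metis lessThan_iff one_neq_zero\<close>)
    have "y \<notin> b ` {..<m}" using yorth orth by force
    hence "card S = m + 1" unfolding S_def using card_image[OF injb] by simp
    with cS show False by simp
  qed
  have xeq: "i < m \<Longrightarrow> x i = (\<Sum>j<m. c j * b j i)" for i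
    using fun_cong[OF y0, of i] unfolding y_def by simp
  have "vnorm2 m x = (\<Sum>i<m. (cmod (\<Sum>j<m. c j * b j i))\<^sup>2)"
    unfolding vnorm2_def using xeq by simp
  also have "\<dots> = (\<Sum>j<m. (cmod (c j))\<^sup>2)"
    by (rule norm_comb) (use orth in auto)
  finally show ?thesis unfolding c_def by simp
qed

definition rscale :: "real \<Rightarrow> (nat \<Rightarrow> nat \<Rightarrow> complex) \<Rightarrow> (nat \<Rightarrow> nat \<Rightarrow> complex)" where
  "rscale c X = (\<lambda>i i'. complex_of_real c * X i i')"

interpretation rvs: vector_space rscale
  by unfold_locales (auto simp: rscale_def ring_distribs fun_eq_iff)

definition FF :: "nat \<Rightarrow> (nat \<Rightarrow> nat \<Rightarrow> complex) \<Rightarrow> (nat \<Rightarrow> nat \<Rightarrow> complex) \<Rightarrow> real" where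
  "FF m X Y = Re (\<Sum>i<m. \<Sum>i'<m. X i i' * cnj (Y i i'))"

lemma FF_add: "FF m (X + Y) Z = FF m X Z + FF m Y Z"
  unfolding FF_def by (simp add: ring_distribs sum.distrib)

lemma FF_scale: "FF m (rscale c X) Z = c * FF m X Z"
  unfolding FF_def rscale_def by (simp add: sum_distrib_left mult_ac)

lemma FF_sym: "FF m X Y = FF m Y X"
proof -
  have "(\<Sum>i<m. \<Sum>i'<m. Y i i' * cnj (X i i')) = (\<Sum>i<m. \<Sum>i'<m. cnj (X i i' * cnj (Y i i')))"
    by (intro sum.cong refl) (simp only: complex_cnj_mult complex_cnj_cnj mult.commute)
  also have "\<dots> = cnj (\<Sum>i<m. \<Sum>i'<m. X i i' * cnj (Y i i'))" by (simp only: cnj_sum)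
  finally have e: "(\<Sum>i<m. \<Sum>i'<m. Y i i' * cnj (X i i')) = cnj (\<Sum>i<m. \<Sum>i'<m. X i i' * cnj (Y i i'))" .
  show ?thesis by (simp only: FF_def e cnj.sel(1))
qed

lemma FF_self: "FF m X X = (\<Sum>i<m. \<Sum>i'<m. (cmod (X i i'))\<^sup>2)"
proof -
  have "(\<Sum>i<m. \<Sum>i'<m. X i i' * cnj (X i i')) = complex_of_real (\<Sum>i<m. \<Sum>i'<m. (cmod (X i i'))\<^sup>2)"
    by (simp only: of_real_sum complex_norm_square)
  thus ?thesis unfolding FF_def by simp
qed

lemma FF_pos: "FF m X X \<ge> 0"
  unfolding FF_self by (intro sum_nonneg) auto

lemma FF_zero: assumes "FF m X X = 0" shows "FF m X Y = 0"
proof -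
  have "\<forall>i\<in>{..<m}. (\<Sum>i'<m. (cmod (X i i'))\<^sup>2) = 0"
    using assms unfolding FF_self by (subst sum_nonneg_eq_0_iff[symmetric]) (auto intro: sum_nonneg)
  hence "\<forall>i<m. \<forall>i'<m. X i i' = 0"
    by (auto simp: sum_nonneg_eq_0_iff)
  thus ?thesis unfolding FF_def by simp
qed

definition Hmat :: "nat \<Rightarrow> nat \<Rightarrow> nat \<Rightarrow> nat \<Rightarrow> complex" where
  "Hmat a b = (\<lambda>i i'. if (i = a \<and> i' = b) \<or> (i = b \<and> i' = a) then 1 else 0)"

definition Kmat :: "nat \<Rightarrow> nat \<Rightarrow> nat \<Rightarrow> nat \<Rightarrow> complex" where
  "Kmat a b = (\<lambda>i i'. if i = a \<and> i' = b then \<i> else if i = b \<and> i' = a then - \<i> else 0)"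

definition Le :: "nat \<Rightarrow> (nat \<times> nat) set" where "Le m = {(a,b). a \<le> b \<and> b < m}"
definition Lt :: "nat \<Rightarrow> (nat \<times> nat) set" where "Lt m = {(a,b). a < b \<and> b < m}"

lemma fin_Le: "finite (Le m)"
proof -
  have "Le m \<subseteq> {..<m} \<times> {..<m}" by (auto simp: Le_def)
  thus ?thesis using finite_subset by blast
qed
lemma fin_Lt: "finite (Lt m)"
proof -
  have "Lt m \<subseteq> {..<m} \<times> {..<m}" by (auto simp: Lt_def)
  thus ?thesis using finite_subset by blast
qed

lemma card_Le: "2 * card (Le m) = m * (m + 1)"
proof (induction m)
  case 0 then show ?case by (simp add: Le_def)
next
  case (Suc m)
  have eq: "Le (Suc m) = Le m \<union> (\<lambda>a. (a, m)) ` {..m}" by (auto simp: Le_def)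
  have "card (Le (Suc m)) = card (Le m) + card ((\<lambda>a. (a, m)) ` {..m})"
    unfolding eq by (rule card_Un_disjoint[OF fin_Le]) (auto simp: Le_def)
  also have "card ((\<lambda>a. (a, m)) ` {..m}) = m + 1" by (subst card_image) (auto simp: inj_on_def)
  finally show ?case using Suc by simp
qed

lemma card_Lt: "card (Lt m) + m = card (Le m)"
proof -
  have eq: "Le m = Lt m \<union> (\<lambda>a. (a, a)) ` {..<m}" by (auto simp: Le_def Lt_def)
  have "card (Le m) = card (Lt m) + card ((\<lambda>a. (a, a)) ` {..<m})"
    unfolding eq by (rule card_Un_disjoint[OF fin_Lt]) (auto simp: Lt_def)
  also have "card ((\<lambda>a. (a, a)) ` {..<m}) = m" by (subst card_image) (auto simp: inj_on_def)
  finally show ?thesis by simp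
qed

definition Tset :: "bool \<Rightarrow> nat \<Rightarrow> (nat \<Rightarrow> nat \<Rightarrow> complex) set" where
  "Tset isreal m = (\<lambda>(a,b). Hmat a b) ` Le m \<union> (if isreal then {} else (\<lambda>(a,b). Kmat a b) ` Lt m)"

lemma fin_Tset: "finite (Tset isreal m)"
  unfolding Tset_def using fin_Le fin_Lt by auto

lemma card_Tset: "card (Tset isreal m) \<le> card (Le m) + (if isreal then 0 else card (Lt m))"
proof -
  have "card (Tset isreal m) \<le> card ((\<lambda>(a,b). Hmat a b) ` Le m) + card (if isreal then {} else (\<lambda>(a,b). Kmat a b) ` Lt m)"
    unfolding Tset_def by (rule card_Un_le)
  also have "\<dots> \<le> card (Le m) + (if isreal then 0 else card (Lt m))"
    by (intro add_mono card_image_le fin_Le) (auto intro: card_image_le fin_Lt)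
  finally show ?thesis .
qed

lemma Hmat_eval: "a \<le> b \<Longrightarrow> Hmat a b i i' = (if (min i i', max i i') = (a, b) then 1 else 0)"
  unfolding Hmat_def by (auto simp: min_def max_def)

lemma Kmat_eval: "a < b \<Longrightarrow> Kmat a b i i' = (if (i, i') = (a, b) then \<i> else 0) + (if (i', i) = (a, b) then - \<i> else 0)"
  unfolding Kmat_def by auto

lemma herm_span:
  assumes sup: "\<And>i i'. i \<ge> m \<or> i' \<ge> m \<Longrightarrow> X i i' = 0"
    and herm: "\<And>i i'. X i' i = cnj (X i i')"
    and rl: "isreal \<Longrightarrow> \<forall>i i'. Im (X i i') = 0"
  shows "X \<in> rvs.span (Tset isreal m)"
proof -
  define A where "A = (\<Sum>p\<in>Le m. rscale (Re (X (fst p) (snd p))) (Hmat (fst p) (snd p)))"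
  define Bm where "Bm = (\<Sum>p\<in>Lt m. rscale (Im (X (fst p) (snd p))) (Kmat (fst p) (snd p)))"
  have Aev: "A i i' = (if (min i i', max i i') \<in> Le m then complex_of_real (Re (X (min i i') (max i i'))) else 0)" for i i'
  proof -
    have "A i i' = (\<Sum>p\<in>Le m. if (min i i', max i i') = p then complex_of_real (Re (X (fst p) (snd p))) else 0)"
      unfolding A_def sum_fun_apply rscale_def
      by (intro sum.cong refl) (auto simp: Le_def Hmat_eval split: if_splits)
    also have "\<dots> = (if (min i i', max i i') \<in> Le m then complex_of_real (Re (X (min i i') (max i i'))) else 0)"
      using fin_Le by simp
    finally show ?thesis .
  qed
  have Bev: "Bm i i' = (if (i, i') \<in> Lt m then \<i> * complex_of_real (Im (X i i')) else 0)
                     + (if (i', i) \<in> Lt m then - \<i> * complex_of_real (Im (X i' i)) else 0)" for i i'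
  proof -
    have "Bm i i' = (\<Sum>p\<in>Lt m. (if (i, i') = p then \<i> * complex_of_real (Im (X (fst p) (snd p))) else 0)
                     + (if (i', i) = p then - \<i> * complex_of_real (Im (X (fst p) (snd p))) else 0))"
      unfolding Bm_def sum_fun_apply rscale_def
      by (intro sum.cong refl) (auto simp: Lt_def Kmat_eval split: if_splits)
    also have "\<dots> = (\<Sum>p\<in>Lt m. (if (i, i') = p then \<i> * complex_of_real (Im (X (fst p) (snd p))) else 0))
                     + (\<Sum>p\<in>Lt m. (if (i', i) = p then - \<i> * complex_of_real (Im (X (fst p) (snd p))) else 0))"
      by (rule sum.distrib)
    also have "\<dots> = (if (i, i') \<in> Lt m then \<i> * complex_of_real (Im (X i i')) else 0)
                     + (if (i', i) \<in> Lt m then - \<i> * complex_of_real (Im (X i' i)) else 0)"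
      using fin_Lt by simp
    finally show ?thesis .
  qed
  have XAB: "X = A + Bm"
  proof (intro ext)
    fix i i'
    have h1: "X i i' = cnj (X i' i)" using herm[of i i'] by simp
    show "X i i' = (A + Bm) i i'"
    proof (cases "i < m \<and> i' < m")
      case False
      then show ?thesis using sup[of i i'] by (auto simp: Aev Bev Le_def Lt_def)
    next
      case True
      consider "i < i'" | "i' < i" | "i = i'" by linarith
      then show ?thesis
      proof cases
        case 1
        then show ?thesis using True by (simp add: Aev Bev Le_def Lt_def complex_eq_iff min_def max_def)
      next
        case 2
        then show ?thesis using True by (subst h1) (simp add: Aev Bev Le_def Lt_def complex_eq_iff min_def max_def)
      next
        case 3
        have "Im (X i i) = 0" using herm[of i i] by (metis complex_cnj_cancel_iff complex_is_Real_iff Reals_cnj_iff)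
        then show ?thesis using True 3 by (simp add: Aev Bev Le_def Lt_def complex_eq_iff)
      qed
    qed
  qed
  have Aspan: "A \<in> rvs.span (Tset isreal m)"
    unfolding A_def
  proof (intro rvs.span_sum rvs.span_scale rvs.span_base)
    fix p assume "p \<in> Le m"
    then show "Hmat (fst p) (snd p) \<in> Tset isreal m" unfolding Tset_def by (auto intro!: image_eqI[of _ _ p] split: prod.splits)
  qed
  show ?thesis
  proof (cases isreal)
    case True
    have "Bm = (\<Sum>p\<in>Lt m. 0)" unfolding Bm_def using rl[OF True] by (intro sum.cong refl) (simp add: rscale_def fun_eq_iff)
    then show ?thesis using XAB Aspan by simp
  next
    case False
    have "Bm \<in> rvs.span (Tset isreal m)"
      unfolding Bm_def
    proof (intro rvs.span_sum rvs.span_scale rvs.span_base)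
      fix p assume "p \<in> Lt m"
      then show "Kmat (fst p) (snd p) \<in> Tset isreal m" using False unfolding Tset_def by (auto intro!: image_eqI[of _ _ p] split: prod.splits)
    qed
    then show ?thesis using XAB Aspan rvs.span_add by simp
  qed
qed

lemma is_proj_props:
  assumes "is_proj (fld isreal) m l P"
  shows "(\<forall>i i'. i \<ge> m \<or> i' \<ge> m \<longrightarrow> P i i' = 0) \<and> (\<forall>i i'. P i' i = cnj (P i i'))
       \<and> (isreal \<longrightarrow> (\<forall>i i'. Im (P i i') = 0)) \<and> (\<Sum>i<m. P i i) = of_nat l"
proof -
  obtain u where fv: "\<forall>s<l. fvec (fld isreal) m (u s)"
    and on: "\<forall>s<l. \<forall>s'<l. cinner m (u s) (u s') = (if s = s' then 1 else 0)"
    and P: "P = (\<lambda>i i'. \<Sum>s<l. u s i * cnj (u s i'))"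
    using assms unfolding is_proj_def by blast
  have sup: "\<forall>i i'. i \<ge> m \<or> i' \<ge> m \<longrightarrow> P i i' = 0"
    using fv unfolding P fvec_def by auto
  have herm: "\<forall>i i'. P i' i = cnj (P i i')"
    unfolding P by (intro allI) (simp only: cnj_sum complex_cnj_mult complex_cnj_cnj mult.commute)
  have rl: "isreal \<longrightarrow> (\<forall>i i'. Im (P i i') = 0)"
  proof (intro impI allI)
    fix i i' assume r: isreal
    have "u s i \<in> \<real>" if "s < l" for s i
      using fv that r unfolding fvec_def fld_def by (cases "i < m") auto
    hence "P i i' \<in> \<real>" unfolding P by (auto intro!: sum_in_Reals Reals_mult simp: Reals_cnj_iff)
    thus "Im (P i i') = 0" by (simp add: complex_is_Real_iff)
  qed
  have "(\<Sum>i<m. P i i) = (\<Sum>s<l. cinner m (u s) (u s))"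
    unfolding P cinner_def by (rule sum.swap)
  also have "\<dots> = (\<Sum>s<l. 1)" using on by simp
  finally have tr: "(\<Sum>i<m. P i i) = of_nat l" by simp
  show ?thesis using sup herm rl tr by blast
qed

lemma FF_add_r: "FF m Z (X + Y) = FF m Z X + FF m Z Y"
  by (simp only: FF_sym[of m Z] FF_add)

lemma FF_scale_r: "FF m Z (rscale c X) = c * FF m Z X"
  by (simp only: FF_sym[of m Z] FF_scale)

lemma card_bound:
  assumes m: "0 < m" and n: "n > dF isreal m + 1"
  shows "card (Tset isreal m) + 1 \<le> n"
proof -
  have cL: "2 * card (Le m) = m * (m + 1)" by (rule card_Le)
  have cL2: "card (Lt m) + m = card (Le m)" by (rule card_Lt)
  have cT: "card (Tset isreal m) \<le> card (Le m) + (if isreal then 0 else card (Lt m))" by (rule card_Tset)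
  show ?thesis
  proof (cases isreal)
    case True
    obtain k where k: "m = Suc k" using m by (cases m) auto
    define t where "t = (k + 3) * k"
    have "2 * card (Le m) = t + 2" using cL unfolding k t_def by (simp add: algebra_simps)
    moreover have "dF isreal m = t div 2" using True unfolding dF_def k t_def by (simp add: algebra_simps)
    ultimately have "dF isreal m + 1 = card (Le m)" by presburger
    then show ?thesis using cT n True by simp
  next
    case False
    have "card (Le m) + card (Lt m) = m * m" using cL cL2 by (simp add: algebra_simps)
    moreover have "dF isreal m + 1 = m * m" using False m unfolding dF_def by (simp add: power2_eq_square)
    ultimately show ?thesis using cT n False by simp
  qed
qed

lemma orthoplex_lower:
  assumes m: "0 < m" and n: "n > dF isreal m + 1"
    and Q: "\<forall>j<n. is_proj (fld isreal) m l (Q j)"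
  shows "\<exists>j<n. \<exists>k<n. j \<noteq> k \<and> trprod m (Q j) (Q k) \<ge> (real l)^2 / real m"
proof (rule ccontr)
  assume "\<not> ?thesis"
  hence neg: "j < n \<Longrightarrow> k < n \<Longrightarrow> j \<noteq> k \<Longrightarrow> trprod m (Q j) (Q k) < (real l)^2 / real m" for j k
    by (meson not_le)
  have props: "(\<forall>i i'. i \<ge> m \<or> i' \<ge> m \<longrightarrow> Q j i i' = 0) \<and> (\<forall>i i'. Q j i' i = cnj (Q j i i'))
       \<and> (isreal \<longrightarrow> (\<forall>i i'. Im (Q j i i') = 0)) \<and> (\<Sum>i<m. Q j i i) = of_nat l" if "j < n" for j
    using is_proj_props Q that by blast
  have Qsup: "\<And>i i'. i \<ge> m \<or> i' \<ge> m \<Longrightarrow> Q j i i' = 0" if "j < n" for j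
    using props[OF that] by blast
  have Qherm: "\<And>i i'. Q j i' i = cnj (Q j i i')" if "j < n" for j
    using props[OF that] by blast
  have Qreal: "isreal \<Longrightarrow> \<forall>i i'. Im (Q j i i') = 0" if "j < n" for j
    using props[OF that] by blast
  have Qtr: "(\<Sum>i<m. Q j i i) = of_nat l" if "j < n" for j
    using props[OF that] by blast
  define u0 :: "nat \<Rightarrow> nat \<Rightarrow> complex" where "u0 = (\<lambda>i i'. if i = i' \<and> i < m then 1 else 0)"
  define c where "c = real l / real m"
  define Xv where "Xv j = Q j + rscale (- c) u0" for j
  have FFQQ: "FF m (Q j) (Q k) = trprod m (Q j) (Q k)" if "k < n" for j k
  proof -
    have "\<forall>i i'. cnj (Q k i i') = Q k i' i" using Qherm[OF that] by (metis complex_cnj_cnj)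
    thus ?thesis unfolding FF_def trprod_def by simp
  qed
  have FFQu: "FF m (Q j) u0 = real l" if "j < n" for j
  proof -
    have "(\<Sum>i<m. \<Sum>i'<m. Q j i i' * cnj (u0 i i')) = (\<Sum>i<m. Q j i i)"
    proof (rule sum.cong[OF refl])
      fix i assume i: "i \<in> {..<m}"
      have "(\<Sum>i'<m. Q j i i' * cnj (u0 i i')) = (\<Sum>i'<m. if i = i' then Q j i i' else 0)"
        using i unfolding u0_def by (intro sum.cong) auto
      also have "\<dots> = Q j i i" using i by simp
      finally show "(\<Sum>i'<m. Q j i i' * cnj (u0 i i')) = Q j i i" .
    qed
    thus ?thesis unfolding FF_def using Qtr[OF that] by simp
  qed
  have FFuu: "FF m u0 u0 = real m"
  proof -
    have "(\<Sum>i<m. \<Sum>i'<m. u0 i i' * cnj (u0 i i')) = (\<Sum>i<m. 1)"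
    proof (rule sum.cong[OF refl])
      fix i assume i: "i \<in> {..<m}"
      have "(\<Sum>i'<m. u0 i i' * cnj (u0 i i')) = (\<Sum>i'<m. if i = i' then 1 else 0)"
        using i unfolding u0_def by (intro sum.cong) auto
      also have "\<dots> = 1" using i by simp
      finally show "(\<Sum>i'<m. u0 i i' * cnj (u0 i i')) = 1" .
    qed
    thus ?thesis unfolding FF_def by simp
  qed
  have mpos: "real m > 0" using m by simp
  have FFXX: "FF m (Xv j) (Xv k) = trprod m (Q j) (Q k) - (real l)^2 / real m" if "j < n" "k < n" for j k
  proof -
    have "FF m (Xv j) (Xv k) = FF m (Q j) (Q k) - c * FF m u0 (Q k) - c * FF m (Q j) u0 + c * c * FF m u0 u0"
      unfolding Xv_def FF_add FF_add_r FF_scale FF_scale_r by (simp add: algebra_simps)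
    also have "\<dots> = trprod m (Q j) (Q k) - c * real l - c * real l + c * c * real m"
      using FFQQ[OF that(2)] FFQu[OF that(1)] FFQu[OF that(2)] FFuu FF_sym[of m u0 "Q k"] by simp
    also have "\<dots> = trprod m (Q j) (Q k) - (real l)^2 / real m"
      unfolding c_def using mpos by (simp add: field_simps power2_eq_square)
    finally show ?thesis .
  qed
  have FFXu: "FF m (Xv j) u0 = 0" if "j < n" for j
    unfolding Xv_def FF_add FF_scale using FFQu[OF that] FFuu mpos by (simp add: c_def)
  have u0span: "u0 \<in> rvs.span (Tset isreal m)"
    by (rule herm_span) (auto simp: u0_def)
  have Qspan: "Q j \<in> rvs.span (Tset isreal m)" if "j < n" for j
    by (rule herm_span) (use Qsup[OF that] Qherm[OF that] Qreal[OF that] in blast)+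
  have Xspan: "Xv j \<in> rvs.span (Tset isreal m)" if "j < n" for j
    unfolding Xv_def by (intro rvs.span_add rvs.span_scale Qspan u0span that)
  show False
  proof (rule obtuse_bound[OF rvs.vector_space_axioms, where F = "FF m" and v = Xv and T = "Tset isreal m" and N = n and ezero = u0])
    show "FF m (x + y) z = FF m x z + FF m y z" for x y z by (rule FF_add)
    show "FF m (rscale c x) z = c * FF m x z" for c x z by (rule FF_scale)
    show "FF m x y = FF m y x" for x y by (rule FF_sym)
    show "FF m x x \<ge> 0" for x by (rule FF_pos)
    show "FF m x x = 0 \<Longrightarrow> FF m x y = 0" for x y by (rule FF_zero)
    show "finite (Tset isreal m)" by (rule fin_Tset)
    show "j < n \<Longrightarrow> Xv j \<in> rvs.span (Tset isreal m)" for j by (rule Xspan)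
    show "u0 \<in> rvs.span (Tset isreal m)" by (rule u0span)
    show "j < n \<Longrightarrow> FF m (Xv j) u0 = 0" for j by (rule FFXu)
    show "FF m u0 u0 > 0" using FFuu mpos by simp
    show "j < n \<Longrightarrow> k < n \<Longrightarrow> j \<noteq> k \<Longrightarrow> FF m (Xv j) (Xv k) < 0" for j k
      using FFXX[of j k] neg[of j k] by simp
    show "n \<ge> card (Tset isreal m) + 1" using card_bound[OF m n] .
  qed
qed

definition pt :: "nat \<Rightarrow> nat" where "pt b = (if even b then b + 1 else b - 1)"

lemma pt_pt: "pt (pt b) = b" unfolding pt_def by auto
lemma pt_lt: "even c \<Longrightarrow> b < c \<Longrightarrow> pt b < c" unfolding pt_def by (auto elim!: evenE oddE)
lemma pt_add_even: "even k \<Longrightarrow> pt (k + t) = k + pt t" unfolding pt_def by (cases "even t") (auto elim: oddE)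

lemma cc_even: "even (2 ^ (r + 1) - 2 :: nat)"
  by (simp add: dvd_diff_nat)

lemma Fmat_eq:
  assumes "t < 2^(r+1) - 2" "b < 2^(r+1) - 2"
  shows "Fmat r t b = (if t = pt b then 1 else 0)"
proof -
  obtain C where C: "C = (2::nat)^(r+1) - 2" by blast
  have ev: "even C" using cc_even C by simp
  have "t < C" "b < C" using assms C by auto
  hence "pt b < C" using pt_lt ev by blast
  have "(t div 2 = b div 2 \<and> t mod 2 \<noteq> b mod 2) \<longleftrightarrow> t = pt b"
    unfolding pt_def by (auto elim!: evenE oddE) presburger+
  thus ?thesis unfolding Fmat_def using assms by auto
qed

lemma Fprod:
  assumes "b < 2^(r+1) - 2"
  shows "(\<Sum>t<2^(r+1) - 2. Sp a t * Fmat r t b) = Sp a (pt b)"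
proof -
  have "pt b < 2^(r+1) - 2" using pt_lt[OF cc_even assms] .
  have "(\<Sum>t<2^(r+1) - 2. Sp a t * Fmat r t b) = (\<Sum>t<2^(r+1) - 2. if t = pt b then Sp a t else 0)"
    by (intro sum.cong refl) (use assms in \<open>simp add: Fmat_eq\<close>)
  also have "\<dots> = Sp a (pt b)" using \<open>pt b < _\<close> by simp
  finally show ?thesis .
qed

lemma Fprod':
  assumes "b < 2 * 2^r - 2"
  shows "(\<Sum>t<2 * 2^r - 2. Sp a t * Fmat r t b) = Sp a (pt b)"
  using Fprod[of b r Sp a] assms by simp

lemma mem_shift:
  "x \<in> L \<union> (\<lambda>y. y + h) ` R \<longleftrightarrow> (x < (h::nat) \<and> x \<in> L) \<or> (h \<le> x \<and> x - h \<in> R)" if "L \<subseteq> {..<h}"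
proof
  assume "x \<in> L \<union> (\<lambda>y. y + h) ` R"
  then show "(x < h \<and> x \<in> L) \<or> (h \<le> x \<and> x - h \<in> R)" using that by auto
next
  assume "(x < h \<and> x \<in> L) \<or> (h \<le> x \<and> x - h \<in> R)"
  then show "x \<in> L \<union> (\<lambda>y. y + h) ` R"
  proof
    assume "h \<le> x \<and> x - h \<in> R"
    then show ?thesis by (intro UnI2 image_eqI[of x _ "x - h"]) auto
  qed auto
qed

lemma Sblock_sub: "Sblock r b \<subseteq> {..<2^r}" unfolding Sblock_def by auto

lemma Smat_Suc: "r \<ge> 1 \<Longrightarrow> Smat (Suc r) = S_step r (Smat r)" by simp

lemma Sblock_Suc_mem:
  assumes r: "r \<ge> 1"
  shows "x \<in> Sblock (Suc r) b \<longleftrightarrow> x < 2 * 2^r \<and> b < 2 + 2 * (2^(r+1) - 2) \<and>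
     (if b = 0 then x < 2^r
      else if b = 1 then 2^r \<le> x
      else if b < 2 + (2^(r+1) - 2) then
        (if x < 2^r then x \<in> Sblock r (b - 2) else x - 2^r \<in> Sblock r (b - 2))
      else (if x < 2^r then x \<in> Sblock r (b - 2 - (2^(r+1) - 2))
            else x - 2^r \<in> Sblock r (pt (b - 2 - (2^(r+1) - 2)))))" (is "_ \<longleftrightarrow> ?R")
proof -
  have "x \<in> Sblock (Suc r) b \<longleftrightarrow> x < 2 * 2^r \<and> S_step r (Smat r) x b = 1"
    unfolding Sblock_def using r by simp
  also have "\<dots> \<longleftrightarrow> ?R"
  proof (cases "x < 2 * 2^r \<and> b < 2 + 2 * (2^(r+1) - 2)")
    case False
    then show ?thesis unfolding S_step_def Let_def by auto
  next
    case True
    then show ?thesis unfolding S_step_def Let_def Sblock_def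
      by (auto simp: Fprod')
  qed
  finally show ?thesis .
qed


definition LL :: "nat \<Rightarrow> nat \<Rightarrow> nat set" where
  "LL r b = (if b = 0 then {..<2^r} else if b = 1 then {} else if b < 2 + (2^(r+1) - 2) then Sblock r (b - 2)
            else Sblock r (b - 2 - (2^(r+1) - 2)))"
definition RR :: "nat \<Rightarrow> nat \<Rightarrow> nat set" where
  "RR r b = (if b = 0 then {} else if b = 1 then {..<2^r} else if b < 2 + (2^(r+1) - 2) then Sblock r (b - 2)
            else Sblock r (pt (b - 2 - (2^(r+1) - 2))))"

lemma LL_sub: "LL r b \<subseteq> {..<2^r}" unfolding LL_def using Sblock_sub by auto
lemma RR_sub: "RR r b \<subseteq> {..<2^r}" unfolding RR_def using Sblock_sub by auto

lemma Sblock_Suc_form: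
  assumes r: "r \<ge> 1" and b: "b < 2 + 2 * (2^(r+1) - 2)"
  shows "Sblock (Suc r) b = LL r b \<union> (\<lambda>y. y + 2^r) ` RR r b"
proof (rule set_eqI)
  fix x
  have sb: "\<And>y b'. y \<in> Sblock r b' \<Longrightarrow> y < 2^r" using Sblock_sub by blast
  show "x \<in> Sblock (Suc r) b \<longleftrightarrow> x \<in> LL r b \<union> (\<lambda>y. y + 2^r) ` RR r b"
    unfolding mem_shift[OF LL_sub] Sblock_Suc_mem[OF r] using b
    by (auto simp: LL_def RR_def dest: sb)
qed

lemma G1:
  assumes "L \<subseteq> {..<h}" "R \<subseteq> {..<(h::nat)}"
  shows "card (L \<union> (\<lambda>y. y + h) ` R) = card L + card R"
proof -
  have fin: "finite L" "finite R" using assms finite_subset by blast+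
  have "card (L \<union> (\<lambda>y. y + h) ` R) = card L + card ((\<lambda>y. y + h) ` R)"
    by (rule card_Un_disjoint) (use fin assms in auto)
  also have "card ((\<lambda>y. y + h) ` R) = card R" by (rule card_image) (simp add: inj_on_def)
  finally show ?thesis .
qed

lemma G2:
  assumes "L \<subseteq> {..<h}" "L' \<subseteq> {..<(h::nat)}"
  shows "(L \<union> (\<lambda>y. y + h) ` R) \<inter> (L' \<union> (\<lambda>y. y + h) ` R') = (L \<inter> L') \<union> (\<lambda>y. y + h) ` (R \<inter> R')"
  using assms by auto

lemma G3:
  assumes "L \<subseteq> {..<(h::nat)}"
  shows "{..<2*h} - (L \<union> (\<lambda>y. y + h) ` R) = ({..<h} - L) \<union> (\<lambda>y. y + h) ` ({..<h} - R)"
proof (rule set_eqI)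
  fix x
  have s: "{..<h} - L \<subseteq> {..<h}" by auto
  show "x \<in> {..<2*h} - (L \<union> (\<lambda>y. y + h) ` R) \<longleftrightarrow> x \<in> ({..<h} - L) \<union> (\<lambda>y. y + h) ` ({..<h} - R)"
    unfolding mem_shift[OF s] using mem_shift[OF assms, of x R] by auto
qed

lemma G4:
  assumes "A \<subseteq> {..<(h::nat)}"
  shows "card (A \<inter> B) + card (A \<inter> ({..<h} - B)) = card A"
proof -
  have fin: "finite A" using assms finite_subset by blast
  have "A = (A \<inter> B) \<union> (A \<inter> ({..<h} - B))" using assms by auto
  hence "card A = card ((A \<inter> B) \<union> (A \<inter> ({..<h} - B)))" by simp
  also have "\<dots> = card (A \<inter> B) + card (A \<inter> ({..<h} - B))"
    by (rule card_Un_disjoint) (use fin in auto)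
  finally show ?thesis by simp
qed

lemma sum_split_add: "(\<Sum>b<n + (k::nat). f b) = (\<Sum>b<n. f b) + (\<Sum>t<k. f (n + t))"
  by (induction k) (auto simp: add.assoc)


definition LA :: "nat \<Rightarrow> nat \<Rightarrow> (nat \<Rightarrow> nat set) \<Rightarrow> nat \<Rightarrow> nat set" where
  "LA c h M b = (if b = 0 then {..<h} else if b = 1 then {} else if b < 2 + c then M (b - 2) else M (b - 2 - c))"
definition RA :: "nat \<Rightarrow> nat \<Rightarrow> (nat \<Rightarrow> nat set) \<Rightarrow> nat \<Rightarrow> nat set" where
  "RA c h M b = (if b = 0 then {} else if b = 1 then {..<h} else if b < 2 + c then M (b - 2) else M (pt (b - 2 - c)))"

lemma ptinj: "pt t = pt t' \<longleftrightarrow> t = t'" by (metis pt_pt)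

lemma cls:
  assumes "b < 2 + 2 * (c::nat)"
  obtains "b = 0" | "b = 1" | t where "b = 2 + t" "t < c" | t where "b = 2 + c + t" "t < c"
proof -
  consider "b = 0" | "b = 1" | "2 \<le> b \<and> b < 2 + c" | "2 + c \<le> b" by linarith
  then show ?thesis
  proof cases
    case 3 then show ?thesis using that(3)[of "b - 2"] by auto
  next
    case 4 then show ?thesis using that(4)[of "b - 2 - c"] assms by auto
  qed (use that in auto)
qed

lemma LA_vals:
  "LA c h M 0 = {..<h}" "LA c h M 1 = {}" "LA c h M (Suc 0) = {}" "t < c \<Longrightarrow> LA c h M (2 + t) = M t" "t < c \<Longrightarrow> LA c h M (2 + c + t) = M t"
  "t < c \<Longrightarrow> LA c h M (Suc (Suc t)) = M t" "t < c \<Longrightarrow> LA c h M (Suc (Suc (c + t))) = M t"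
  unfolding LA_def by auto
lemma RA_vals:
  "RA c h M 0 = {}" "RA c h M 1 = {..<h}" "RA c h M (Suc 0) = {..<h}" "t < c \<Longrightarrow> RA c h M (2 + t) = M t" "t < c \<Longrightarrow> RA c h M (2 + c + t) = M (pt t)"
  "t < c \<Longrightarrow> RA c h M (Suc (Suc t)) = M t" "t < c \<Longrightarrow> RA c h M (Suc (Suc (c + t))) = M (pt t)"
  unfolding RA_def by auto

lemma Ibound_step:
  fixes M :: "nat \<Rightarrow> nat set" and h c :: nat
  assumes cardM: "\<And>t. t < c \<Longrightarrow> 2 * card (M t) = h"
    and IM: "\<And>t t'. t < c \<Longrightarrow> t' < c \<Longrightarrow> t \<noteq> t' \<Longrightarrow> 4 * card (M t \<inter> M t') \<le> h"
    and PM: "\<And>t. t < c \<Longrightarrow> M (pt t) = {..<h} - M t"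
    and ptc: "\<And>t. t < c \<Longrightarrow> pt t < c"
    and Msub: "\<And>t. M t \<subseteq> {..<h}"
    and b: "b < 2 + 2 * c" and b': "b' < 2 + 2 * c" and neq: "b \<noteq> b'"
  shows "4 * (card (LA c h M b \<inter> LA c h M b') + card (RA c h M b \<inter> RA c h M b')) \<le> 2 * h"
proof -
  note simps = LA_vals RA_vals
  show ?thesis
  proof (cases rule: cls[OF b])
    case 1
    note b1 = this
    show ?thesis
    proof (cases rule: cls[OF b'])
      case 1
      note b2 = this
      show ?thesis using neq b1 b2 by simp
    next
      case 2
      note b2 = this
      have "card ({..<h} \<inter> {}) + card ({} \<inter> {..<h}) = card (LA c h M b \<inter> LA c h M b') + card (RA c h M b \<inter> RA c h M b')"
        by (simp only: b1(1) b2(1) simps )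
      moreover have "4 * (card ({..<h} \<inter> {}) + card ({} \<inter> {..<h})) \<le> 2 * h"
        by simp
      ultimately show ?thesis by simp
    next
      case (3 t')
      note b2 = this
      have tvt': "t' < c" using b2 by simp
      have "card ({..<h} \<inter> M t') + card ({} \<inter> M t') = card (LA c h M b \<inter> LA c h M b') + card (RA c h M b \<inter> RA c h M b')"
        by (simp only: b1(1) b2(1) simps tvt')
      moreover have "4 * (card ({..<h} \<inter> M t') + card ({} \<inter> M t')) \<le> 2 * h"
        using cardM[OF tvt'] Msub[of t'] by (simp add: Int_absorb1 Int_absorb2)
      ultimately show ?thesis by simp
    next
      case (4 t')
      note b2 = this
      have tvt': "t' < c" using b2 by simp
      have "card ({..<h} \<inter> M t') + card ({} \<inter> M (pt t')) = card (LA c h M b \<inter> LA c h M b') + card (RA c h M b \<inter> RA c h M b')"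
        by (simp only: b1(1) b2(1) simps tvt')
      moreover have "4 * (card ({..<h} \<inter> M t') + card ({} \<inter> M (pt t'))) \<le> 2 * h"
        using cardM[OF tvt'] Msub[of t'] by (simp add: Int_absorb1 Int_absorb2)
      ultimately show ?thesis by simp
    qed
  next
    case 2
    note b1 = this
    show ?thesis
    proof (cases rule: cls[OF b'])
      case 1
      note b2 = this
      have "card ({} \<inter> {..<h}) + card ({..<h} \<inter> {}) = card (LA c h M b \<inter> LA c h M b') + card (RA c h M b \<inter> RA c h M b')"
        by (simp only: b1(1) b2(1) simps )
      moreover have "4 * (card ({} \<inter> {..<h}) + card ({..<h} \<inter> {})) \<le> 2 * h"
        by simp
      ultimately show ?thesis by simp
    next
      case 2
      note b2 = this
      show ?thesis using neq b1 b2 by simp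
    next
      case (3 t')
      note b2 = this
      have tvt': "t' < c" using b2 by simp
      have "card ({} \<inter> M t') + card ({..<h} \<inter> M t') = card (LA c h M b \<inter> LA c h M b') + card (RA c h M b \<inter> RA c h M b')"
        by (simp only: b1(1) b2(1) simps tvt')
      moreover have "4 * (card ({} \<inter> M t') + card ({..<h} \<inter> M t')) \<le> 2 * h"
        using cardM[OF tvt'] Msub[of t'] by (simp add: Int_absorb1 Int_absorb2)
      ultimately show ?thesis by simp
    next
      case (4 t')
      note b2 = this
      have tvt': "t' < c" using b2 by simp
      have "card ({} \<inter> M t') + card ({..<h} \<inter> M (pt t')) = card (LA c h M b \<inter> LA c h M b') + card (RA c h M b \<inter> RA c h M b')"
        by (simp only: b1(1) b2(1) simps tvt')
      moreover have "4 * (card ({} \<inter> M t') + card ({..<h} \<inter> M (pt t'))) \<le> 2 * h"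
        using cardM[OF ptc[OF tvt']] Msub[of "pt t'"] by (simp add: Int_absorb1 Int_absorb2)
      ultimately show ?thesis by simp
    qed
  next
    case (3 t)
    note b1 = this
    show ?thesis
    proof (cases rule: cls[OF b'])
      case 1
      note b2 = this
      have tvt: "t < c" using b1 by simp
      have "card (M t \<inter> {..<h}) + card (M t \<inter> {}) = card (LA c h M b \<inter> LA c h M b') + card (RA c h M b \<inter> RA c h M b')"
        by (simp only: b1(1) b2(1) simps tvt)
      moreover have "4 * (card (M t \<inter> {..<h}) + card (M t \<inter> {})) \<le> 2 * h"
        using cardM[OF tvt] Msub[of t] by (simp add: Int_absorb1 Int_absorb2)
      ultimately show ?thesis by simp
    next
      case 2
      note b2 = this
      have tvt: "t < c" using b1 by simp
      have "card (M t \<inter> {}) + card (M t \<inter> {..<h}) = card (LA c h M b \<inter> LA c h M b') + card (RA c h M b \<inter> RA c h M b')"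
        by (simp only: b1(1) b2(1) simps tvt tvt)
      moreover have "4 * (card (M t \<inter> {}) + card (M t \<inter> {..<h})) \<le> 2 * h"
        using cardM[OF tvt] Msub[of t] by (simp add: Int_absorb1 Int_absorb2)
      ultimately show ?thesis by simp
    next
      case (3 t')
      note b2 = this
      have tvt: "t < c" using b1 by simp
      have tvt': "t' < c" using b2 by simp
      have "card (M t \<inter> M t') + card (M t \<inter> M t') = card (LA c h M b \<inter> LA c h M b') + card (RA c h M b \<inter> RA c h M b')"
        by (simp only: b1(1) b2(1) simps tvt' tvt tvt)
      moreover have "4 * (card (M t \<inter> M t') + card (M t \<inter> M t')) \<le> 2 * h"
        using IM[OF tvt tvt'] neq b1 b2 by simp
      ultimately show ?thesis by simp
    next
      case (4 t')
      note b2 = this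
      have tvt: "t < c" using b1 by simp
      have tvt': "t' < c" using b2 by simp
      have "card (M t \<inter> M t') + card (M t \<inter> M (pt t')) = card (LA c h M b \<inter> LA c h M b') + card (RA c h M b \<inter> RA c h M b')"
        by (simp only: b1(1) b2(1) simps tvt' tvt tvt)
      moreover have "4 * (card (M t \<inter> M t') + card (M t \<inter> M (pt t'))) \<le> 2 * h"
        using G4[OF Msub[of t], of "M t'"] PM[OF tvt'] cardM[OF tvt] by simp
      ultimately show ?thesis by simp
    qed
  next
    case (4 t)
    note b1 = this
    show ?thesis
    proof (cases rule: cls[OF b'])
      case 1
      note b2 = this
      have tvt: "t < c" using b1 by simp
      have "card (M t \<inter> {..<h}) + card (M (pt t) \<inter> {}) = card (LA c h M b \<inter> LA c h M b') + card (RA c h M b \<inter> RA c h M b')"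
        by (simp only: b1(1) b2(1) simps tvt)
      moreover have "4 * (card (M t \<inter> {..<h}) + card (M (pt t) \<inter> {})) \<le> 2 * h"
        using cardM[OF tvt] Msub[of t] by (simp add: Int_absorb1 Int_absorb2)
      ultimately show ?thesis by simp
    next
      case 2
      note b2 = this
      have tvt: "t < c" using b1 by simp
      have "card (M t \<inter> {}) + card (M (pt t) \<inter> {..<h}) = card (LA c h M b \<inter> LA c h M b') + card (RA c h M b \<inter> RA c h M b')"
        by (simp only: b1(1) b2(1) simps tvt tvt)
      moreover have "4 * (card (M t \<inter> {}) + card (M (pt t) \<inter> {..<h})) \<le> 2 * h"
        using cardM[OF ptc[OF tvt]] Msub[of "pt t"] by (simp add: Int_absorb1 Int_absorb2)
      ultimately show ?thesis by simp
    next
      case (3 t')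
      note b2 = this
      have tvt: "t < c" using b1 by simp
      have tvt': "t' < c" using b2 by simp
      have "card (M t \<inter> M t') + card (M (pt t) \<inter> M t') = card (LA c h M b \<inter> LA c h M b') + card (RA c h M b \<inter> RA c h M b')"
        by (simp only: b1(1) b2(1) simps tvt' tvt tvt)
      moreover have "4 * (card (M t \<inter> M t') + card (M (pt t) \<inter> M t')) \<le> 2 * h"
        using G4[OF Msub[of t'], of "M t"] PM[OF tvt] cardM[OF tvt'] by (simp add: Int_commute)
      ultimately show ?thesis by simp
    next
      case (4 t')
      note b2 = this
      have tvt: "t < c" using b1 by simp
      have tvt': "t' < c" using b2 by simp
      have "card (M t \<inter> M t') + card (M (pt t) \<inter> M (pt t')) = card (LA c h M b \<inter> LA c h M b') + card (RA c h M b \<inter> RA c h M b')"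
        by (simp only: b1(1) b2(1) simps tvt' tvt tvt)
      moreover have "4 * (card (M t \<inter> M t') + card (M (pt t) \<inter> M (pt t'))) \<le> 2 * h"
        using IM[OF tvt tvt'] IM[OF ptc[OF tvt] ptc[OF tvt']] neq b1 b2 ptinj[of t t'] by simp
      ultimately show ?thesis by simp
    qed
  qed
qed


lemma step_card:
  fixes M :: "nat \<Rightarrow> nat set" and h c :: nat
  assumes cardM: "\<And>t. t < c \<Longrightarrow> 2 * card (M t) = h"
    and ptc: "\<And>t. t < c \<Longrightarrow> pt t < c"
    and b: "b < 2 + 2 * c"
  shows "card (LA c h M b) + card (RA c h M b) = h"
proof (cases rule: cls[OF b])
  case (3 t) then show ?thesis using cardM[of t] by (simp add: LA_def RA_def)
next
  case (4 t) then show ?thesis using cardM[of t] cardM[of "pt t"] ptc[of t] by (simp add: LA_def RA_def)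
qed (auto simp: LA_def RA_def)

lemma step_compl:
  fixes M :: "nat \<Rightarrow> nat set" and h c :: nat
  assumes PM: "\<And>t. t < c \<Longrightarrow> M (pt t) = {..<h} - M t"
    and ptc: "\<And>t. t < c \<Longrightarrow> pt t < c"
    and Msub: "\<And>t. M t \<subseteq> {..<h}"
    and ev: "even c"
    and b: "b < 2 + 2 * c"
  shows "pt b < 2 + 2 * c \<and> LA c h M (pt b) = {..<h} - LA c h M b \<and> RA c h M (pt b) = {..<h} - RA c h M b"
proof (cases rule: cls[OF b])
  case 1 then show ?thesis by (simp add: LA_def RA_def pt_def)
next
  case 2 then show ?thesis by (simp add: LA_def RA_def pt_def)
next
  case (3 t)
  have e: "pt b = 2 + pt t" using 3 pt_add_even[of 2 t] by simp
  have "pt t < c" using ptc 3 by simp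
  then show ?thesis using 3 e PM[of t] by (simp add: LA_vals RA_vals)
next
  case (4 t)
  have e: "pt b = 2 + c + pt t" using 4 pt_add_even[of "2 + c" t] ev by simp
  have ptt: "pt t < c" using ptc 4 by simp
  have "{..<h} - ({..<h} - M t) = M t" using Msub[of t] by auto
  then show ?thesis using 4 e PM[of t] ptt by (simp add: LA_vals RA_vals pt_pt)
qed

lemma step_count:
  fixes M :: "nat \<Rightarrow> nat set" and h c :: nat
  assumes NM: "(\<Sum>t<c. if a \<in> M t then 1 else 0) = (h - 1 :: nat)"
    and ptbij: "bij_betw pt {..<c} {..<c}"
    and ha: "a < h"
  shows "(\<Sum>b<2 + 2 * c. if a \<in> LA c h M b then 1 else 0) = (2 * h - 1 :: nat)"
    and "(\<Sum>b<2 + 2 * c. if a \<in> RA c h M b then 1 else 0) = (2 * h - 1 :: nat)"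
proof -
  have split: "(\<Sum>b<2 + 2 * c. f b) = f 0 + f 1 + (\<Sum>t<c. f (2 + t)) + (\<Sum>t<c. f (2 + c + t))" for f :: "nat \<Rightarrow> nat"
  proof -
    have e: "2 + 2 * c = (2 + c) + c" by simp
    have "(\<Sum>b<2 + 2 * c. f b) = (\<Sum>b<(2 + c) + c. f b)" by (simp only: e)
    also have "\<dots> = (\<Sum>b<2 + c. f b) + (\<Sum>t<c. f (2 + c + t))" by (rule sum_split_add)
    also have "(\<Sum>b<2 + c. f b) = (\<Sum>b<2. f b) + (\<Sum>t<c. f (2 + t))" by (rule sum_split_add)
    also have "(\<Sum>b<2::nat. f b) = f 0 + f 1" by (simp add: numeral_2_eq_2)
    finally show ?thesis .
  qed
  have NMp: "(\<Sum>t<c. if a \<in> M (pt t) then 1 else 0) = (h - 1 :: nat)"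
    using sum.reindex_bij_betw[OF ptbij, of "\<lambda>t. if a \<in> M t then 1 else (0::nat)"] NM by simp
  have l2: "(\<Sum>t<c. if a \<in> LA c h M (2 + t) then 1 else 0) = (h - 1 :: nat)"
  proof -
    have "(\<Sum>t<c. if a \<in> LA c h M (2 + t) then 1 else 0) = (\<Sum>t<c. if a \<in> M t then 1 else (0::nat))"
      by (intro sum.cong refl) (simp add: LA_vals)
    thus ?thesis using NM by simp
  qed
  have l3: "(\<Sum>t<c. if a \<in> LA c h M (2 + c + t) then 1 else 0) = (h - 1 :: nat)"
  proof -
    have "(\<Sum>t<c. if a \<in> LA c h M (2 + c + t) then 1 else 0) = (\<Sum>t<c. if a \<in> M t then 1 else (0::nat))"
      by (intro sum.cong refl) (simp add: LA_vals)
    thus ?thesis using NM by simp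
  qed
  have r2: "(\<Sum>t<c. if a \<in> RA c h M (2 + t) then 1 else 0) = (h - 1 :: nat)"
  proof -
    have "(\<Sum>t<c. if a \<in> RA c h M (2 + t) then 1 else 0) = (\<Sum>t<c. if a \<in> M t then 1 else (0::nat))"
      by (intro sum.cong refl) (simp add: RA_vals)
    thus ?thesis using NM by simp
  qed
  have r3: "(\<Sum>t<c. if a \<in> RA c h M (2 + c + t) then 1 else 0) = (h - 1 :: nat)"
  proof -
    have "(\<Sum>t<c. if a \<in> RA c h M (2 + c + t) then 1 else 0) = (\<Sum>t<c. if a \<in> M (pt t) then 1 else (0::nat))"
      by (intro sum.cong refl) (simp add: RA_vals)
    thus ?thesis using NMp by simp
  qed
  show "(\<Sum>b<2 + 2 * c. if a \<in> LA c h M b then 1 else 0) = (2 * h - 1 :: nat)"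
    unfolding split l2 l3 using ha by (simp add: LA_def)
  show "(\<Sum>b<2 + 2 * c. if a \<in> RA c h M b then 1 else 0) = (2 * h - 1 :: nat)"
    unfolding split r2 r3 using ha by (simp add: RA_def)
qed


lemma LA_sub: "(\<And>t. M t \<subseteq> {..<h}) \<Longrightarrow> LA c h M b \<subseteq> {..<h}" unfolding LA_def by auto
lemma RA_sub: "(\<And>t. M t \<subseteq> {..<h}) \<Longrightarrow> RA c h M b \<subseteq> {..<h}" unfolding RA_def by auto

definition SPr :: "nat \<Rightarrow> bool" where
  "SPr r \<longleftrightarrow> (\<forall>b < 2^(r+1) - 2. 2 * card (Sblock r b) = 2^r) \<and>
    (\<forall>b < 2^(r+1) - 2. \<forall>b' < 2^(r+1) - 2. b \<noteq> b' \<longrightarrow> 4 * card (Sblock r b \<inter> Sblock r b') \<le> 2^r) \<and>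
    (\<forall>b < 2^(r+1) - 2. Sblock r (pt b) = {..<2^r} - Sblock r b) \<and>
    (\<forall>a < 2^r. (\<Sum>b < 2^(r+1) - 2. if a \<in> Sblock r b then 1 else 0) = (2^r - 1 :: nat))"

lemma all_less_2: "(\<forall>b<(2::nat). P b) \<longleftrightarrow> P 0 \<and> P 1"
  by (metis less_2_cases One_nat_def pos2 one_less_numeral_iff semiring_norm(76))

lemma SPr_base: "SPr 1"
proof -
  have S1: "Sblock 1 b = (if b < 2 then {b} else {})" for b by (auto simp: Sblock_def)
  have s2: "(2::nat)^(1+1) - 2 = 2" "(2::nat)^1 = 2" by simp_all
  have sum2: "(\<Sum>b<2::nat. f b) = f 0 + f 1" for f :: "nat \<Rightarrow> nat" by (simp add: numeral_2_eq_2)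
  show ?thesis unfolding SPr_def s2 all_less_2 sum2 S1
    by (auto simp: pt_def)
qed

lemma SPr_step:
  assumes r: "r \<ge> 1" and IH: "SPr r"
  shows "SPr (Suc r)"
proof -
  define h :: nat where "h = 2^r"
  define c :: nat where "c = 2^(r+1) - 2"
  define M where "M = Sblock r"
  have h2: "h \<ge> 2" unfolding h_def using r by (metis one_less_numeral_iff power_increasing_iff power_one_right semiring_norm(76) le_less)
  have cdef: "c = 2 * h - 2" unfolding c_def h_def by simp
  have ev: "even c" unfolding cdef by simp
  have c': "2^(Suc r + 1) - 2 = 2 + 2 * c" unfolding cdef h_def using h2[unfolded h_def] by simp
  have h': "(2::nat)^(Suc r) = 2 * h" unfolding h_def by simp
  have cardM: "\<And>t. t < c \<Longrightarrow> 2 * card (M t) = h"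
    using IH unfolding SPr_def c_def h_def M_def by blast
  have IM: "\<And>t t'. t < c \<Longrightarrow> t' < c \<Longrightarrow> t \<noteq> t' \<Longrightarrow> 4 * card (M t \<inter> M t') \<le> h"
    using IH unfolding SPr_def c_def h_def M_def by blast
  have PM: "\<And>t. t < c \<Longrightarrow> M (pt t) = {..<h} - M t"
    using IH unfolding SPr_def c_def h_def M_def by blast
  have NM: "\<And>a. a < h \<Longrightarrow> (\<Sum>t<c. if a \<in> M t then 1 else 0) = (h - 1 :: nat)"
    using IH unfolding SPr_def c_def h_def M_def by blast
  have ptc: "\<And>t. t < c \<Longrightarrow> pt t < c" using pt_lt ev by blast
  have Msub: "\<And>t. M t \<subseteq> {..<h}" unfolding M_def h_def by (rule Sblock_sub)
  have ptbij: "bij_betw pt {..<c} {..<c}"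
    by (rule bij_betw_byWitness[of _ pt]) (auto simp: pt_pt ptc)
  have form: "Sblock (Suc r) b = LA c h M b \<union> (\<lambda>y. y + h) ` RA c h M b" if "b < 2 + 2 * c" for b
  proof -
    have "LL r b = LA c h M b" "RR r b = RA c h M b"
      unfolding LL_def LA_def RR_def RA_def c_def h_def M_def by simp_all
    moreover have "b < 2 + 2 * (2^(r+1) - 2)" using that c_def by simp
    ultimately show ?thesis using Sblock_Suc_form[OF r] h_def by simp
  qed
  have LAs: "LA c h M b \<subseteq> {..<h}" for b using LA_sub Msub by blast
  have RAs: "RA c h M b \<subseteq> {..<h}" for b using RA_sub Msub by blast
  have P1: "2 * card (Sblock (Suc r) b) = 2 * h" if "b < 2 + 2 * c" for b
    using form[OF that] G1[OF LAs RAs] step_card[where M = M and h = h and c = c, OF cardM ptc that] by simp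
  have P2: "4 * card (Sblock (Suc r) b \<inter> Sblock (Suc r) b') \<le> 2 * h"
    if "b < 2 + 2 * c" "b' < 2 + 2 * c" "b \<noteq> b'" for b b'
  proof -
    have "Sblock (Suc r) b \<inter> Sblock (Suc r) b' = (LA c h M b \<inter> LA c h M b') \<union> (\<lambda>y. y + h) ` (RA c h M b \<inter> RA c h M b')"
      unfolding form[OF that(1)] form[OF that(2)] by (rule G2[OF LAs LAs])
    moreover have "card ((LA c h M b \<inter> LA c h M b') \<union> (\<lambda>y. y + h) ` (RA c h M b \<inter> RA c h M b'))
        = card (LA c h M b \<inter> LA c h M b') + card (RA c h M b \<inter> RA c h M b')"
      by (rule G1) (use LAs RAs in blast)+
    ultimately show ?thesis using Ibound_step[where M = M and h = h and c = c, OF cardM IM PM ptc Msub that] by simp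
  qed
  have P3: "Sblock (Suc r) (pt b) = {..<2 * h} - Sblock (Suc r) b" if "b < 2 + 2 * c" for b
  proof -
    have sc: "pt b < 2 + 2 * c \<and> LA c h M (pt b) = {..<h} - LA c h M b \<and> RA c h M (pt b) = {..<h} - RA c h M b"
      by (rule step_compl[where M = M and h = h and c = c, OF PM ptc Msub ev that])
    show ?thesis unfolding form[OF that] form[of "pt b", OF sc[THEN conjunct1]] G3[OF LAs] using sc by simp
  qed
  have memS: "a \<in> Sblock (Suc r) b \<longleftrightarrow> (a < h \<and> a \<in> LA c h M b) \<or> (h \<le> a \<and> a - h \<in> RA c h M b)"
    if "b < 2 + 2 * c" for a b
    unfolding form[OF that] by (rule mem_shift[OF LAs])
  have P4: "(\<Sum>b < 2 + 2 * c. if a \<in> Sblock (Suc r) b then 1 else 0) = (2 * h - 1 :: nat)" if "a < 2 * h" for a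
  proof (cases "a < h")
    case True
    have "(\<Sum>b < 2 + 2 * c. if a \<in> Sblock (Suc r) b then 1 else 0) = (\<Sum>b < 2 + 2 * c. if a \<in> LA c h M b then 1 else (0::nat))"
      using True by (intro sum.cong refl) (auto simp: memS)
    also have "\<dots> = 2 * h - 1" by (rule step_count(1)[OF NM[OF True] ptbij True])
    finally show ?thesis .
  next
    case False
    have ah: "a - h < h" using that False by simp
    have "(\<Sum>b < 2 + 2 * c. if a \<in> Sblock (Suc r) b then 1 else 0) = (\<Sum>b < 2 + 2 * c. if a - h \<in> RA c h M b then 1 else (0::nat))"
      using False by (intro sum.cong refl) (auto simp: memS)
    also have "\<dots> = 2 * h - 1" by (rule step_count(2)[OF NM[OF ah] ptbij ah])
    finally show ?thesis .
  qed
  show ?thesis unfolding SPr_def c' h' using P1 P2 P3 P4 by auto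
qed

lemma SPr_all: "r \<ge> 1 \<Longrightarrow> SPr r"
proof (induction r rule: nat_induct_at_least)
  case base then show ?case by (rule SPr_base)
next
  case (Suc n) then show ?case using SPr_step by blast
qed

lemma block_facts:
  assumes r: "r \<ge> 1" and b: "b < 2^(r+1) - 2"
  shows "Sblock r b \<subseteq> {..<2^r} \<and> card (Sblock r b) = 2^(r-1)"
proof -
  have "2 * card (Sblock r b) = 2^r" using SPr_all[OF r] b unfolding SPr_def by blast
  moreover have "(2::nat)^r = 2 * 2^(r-1)" using r by (metis Suc_diff_le diff_Suc_1 power_Suc)
  ultimately have "card (Sblock r b) = 2^(r-1)" by simp
  thus ?thesis using Sblock_sub[of r b] by blast
qed

lemma block_pairs:
  assumes r: "r \<ge> 1" and b: "b < 2^(r+1) - 2" and b': "b' < 2^(r+1) - 2" and ne: "b \<noteq> b'"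
  shows "4 * card (Sblock r b \<inter> Sblock r b') \<le> 2^r"
  using SPr_all[OF r] b b' ne unfolding SPr_def by blast

lemma block_cover:
  fixes g :: "nat \<Rightarrow> real"
  assumes r: "r \<ge> 1"
  shows "(\<Sum>b<2^(r+1) - 2. \<Sum>j\<in>Sblock r b. g j) = real (2^r - 1) * (\<Sum>j<2^r. g j)"
proof -
  define m :: nat where "m = 2^r"
  define c :: nat where "c = 2^(r+1) - 2"
  have cnt: "(\<Sum>b<c. if a \<in> Sblock r b then 1 else 0) = (m - 1 :: nat)" if "a < m" for a
    using SPr_all[OF r] that unfolding SPr_def m_def c_def by blast
  have "(\<Sum>b<c. \<Sum>j\<in>Sblock r b. g j) = (\<Sum>b<c. \<Sum>j<m. if j \<in> Sblock r b then g j else 0)"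
  proof (rule sum.cong[OF refl])
    fix b
    have "Sblock r b = {..<m} \<inter> Sblock r b" using Sblock_sub[of r b] unfolding m_def by blast
    hence "(\<Sum>j\<in>Sblock r b. g j) = (\<Sum>j\<in>{..<m} \<inter> Sblock r b. g j)" by simp
    also have "\<dots> = (\<Sum>j<m. if j \<in> Sblock r b then g j else 0)" by (rule sum.inter_restrict) simp
    finally show "(\<Sum>j\<in>Sblock r b. g j) = (\<Sum>j<m. if j \<in> Sblock r b then g j else 0)" .
  qed
  also have "\<dots> = (\<Sum>j<m. \<Sum>b<c. if j \<in> Sblock r b then g j else 0)" by (rule sum.swap)
  also have "\<dots> = (\<Sum>j<m. g j * real (\<Sum>b<c. if j \<in> Sblock r b then 1 else 0))"
    by (intro sum.cong refl) (simp add: of_nat_sum sum_distrib_left if_distrib cong: if_cong)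
  also have "\<dots> = (\<Sum>j<m. g j * real (m - 1))"
    by (intro sum.cong refl) (simp add: cnt)
  also have "\<dots> = real (m - 1) * (\<Sum>j<m. g j)" by (simp only: sum_distrib_right[symmetric] mult.commute)
  finally show ?thesis unfolding m_def c_def .
qed


lemma card_arith:
  assumes ml: "m = 2 * l" and l1: "l \<ge> 1"
  shows "kF isreal m * (2 * m - 2) = 2 * dF isreal m \<and> kF isreal m * (2 * m - 2) > dF isreal m + 1"
proof -
  obtain l' where l': "l = Suc l'" using l1 by (cases l) auto
  have m: "m = 2 * l' + 2" using ml l' by simp
  show ?thesis
  proof (cases isreal)
    case True
    have e1: "kF isreal m * (2 * m - 2) = 4*l'*l' + 10*l' + 4" using True unfolding kF_def m by (simp add: algebra_simps)
    have "(m + 2) * (m - 1) = 2 * (2*l'*l' + 5*l' + 2)" unfolding m by (simp add: algebra_simps)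
    hence e2: "dF isreal m = 2*l'*l' + 5*l' + 2" using True unfolding dF_def by simp
    show ?thesis using e1 e2 by simp
  next
    case False
    have e1: "kF isreal m * (2 * m - 2) = 8*l'*l' + 16*l' + 6" using False unfolding kF_def m by (simp add: algebra_simps)
    have e2: "dF isreal m = 4*l'*l' + 8*l' + 3" using False unfolding dF_def m by (simp add: algebra_simps power2_eq_square)
    show ?thesis using e1 e2 by simp
  qed
qed


theorem theorem4p5:
  fixes isreal :: bool and r :: nat and K :: "'k set"
    and B :: "'k \<Rightarrow> nat \<Rightarrow> nat \<Rightarrow> complex"
  assumes "r > 0"
    and "isreal \<longrightarrow> even r"
    and "maximal_mub isreal (2^r) K B"
  shows "\<exists>l. tight_fusion_frame (fld isreal) (2^r) l (K \<times> {..<2^(r+1) - 2})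
               (\<lambda>(k, b). coord_proj (B k) (Sblock r b))
           \<and> maximal_orthoplectic isreal (2^r) l (K \<times> {..<2^(r+1) - 2})
               (\<lambda>(k, b). coord_proj (B k) (Sblock r b))"
proof -
  have r1: "r \<ge> 1" using assms(1) by simp
  define m :: nat where "m = 2^r"
  define l :: nat where "l = 2^(r-1)"
  define c :: nat where "c = 2^(r+1) - 2"
  define I where "I = K \<times> {..<c}"
  define P where "P = (\<lambda>(k, b). coord_proj (B k) (Sblock r b))"
  have ml: "m = 2 * l" unfolding m_def l_def using r1 by (metis Suc_diff_le diff_Suc_1 power_Suc)
  have l1: "l \<ge> 1" unfolding l_def by simp
  have cm: "c = 2 * m - 2" unfolding c_def m_def by simp
  have mpos: "m > 0" using ml l1 by simp
  have onb: "\<And>k. k \<in> K \<Longrightarrow> onb (fld isreal) m (B k)"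
    using assms(3) unfolding maximal_mub_def m_def by blast
  have mub: "\<And>k k'. k \<in> K \<Longrightarrow> k' \<in> K \<Longrightarrow> k \<noteq> k' \<Longrightarrow> mutually_unbiased m (B k) (B k')"
    using assms(3) unfolding maximal_mub_def m_def by blast
  have finK: "finite K" and cardK: "card K = kF isreal m"
    using assms(3) unfolding maximal_mub_def m_def by blast+
  have Jf: "\<And>b. b < c \<Longrightarrow> Sblock r b \<subseteq> {..<m} \<and> card (Sblock r b) = l"
    using block_facts[OF r1] unfolding c_def m_def l_def by blast
  have finJ: "\<And>b. finite (Sblock r b)" using Sblock_sub finite_subset by blast
  have orth: "\<And>k j j'. k \<in> K \<Longrightarrow> j < m \<Longrightarrow> j' < m \<Longrightarrow> cinner m (B k j) (B k j') = (if j = j' then 1 else 0)"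
    using onb unfolding onb_def by blast
  have cK2: "card K \<ge> 2" unfolding cardK kF_def using ml l1 by auto
  have c2: "c \<ge> 2" unfolding cm using ml l1 by simp
  have finI: "finite I" unfolding I_def using finK by simp
  have cardI: "card I = kF isreal m * (2 * m - 2)" unfolding I_def cm using finK cardK by (simp add: card_cartesian_product)
  have ca: "card I = 2 * dF isreal m \<and> card I > dF isreal m + 1"
    unfolding cardI by (rule card_arith[OF ml l1])
  have isp: "\<forall>z\<in>I. is_proj (fld isreal) m l (P z)"
  proof
    fix z assume "z \<in> I"
    then obtain k b where z: "z = (k, b)" "k \<in> K" "b < c" unfolding I_def by auto
    show "is_proj (fld isreal) m l (P z)"
      using proj_is_proj[OF onb[OF z(2)], of "Sblock r b"] Jf[OF z(3)] unfolding P_def z(1) by simp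
  qed
  define A where "A = real (card K) * real (m - 1)"
  have Apos: "A > 0" unfolding A_def using cK2 ml l1 by simp
  have normsum: "(\<Sum>z\<in>I. vnorm2 m (mat_vec m (P z) x)) = A * vnorm2 m x" if x: "fvec (fld isreal) m x" for x
  proof -
    have xs: "\<forall>i\<ge>m. x i = 0" using x unfolding fvec_def by blast
    have inner: "(\<Sum>b<c. vnorm2 m (mat_vec m (coord_proj (B k) (Sblock r b)) x)) = real (m - 1) * vnorm2 m x"
      if k: "k \<in> K" for k
    proof -
      have "(\<Sum>b<c. vnorm2 m (mat_vec m (coord_proj (B k) (Sblock r b)) x))
          = (\<Sum>b<c. \<Sum>j\<in>Sblock r b. (cmod (cinner m x (B k j)))\<^sup>2)"
      proof (rule sum.cong[OF refl])
        fix b assume "b \<in> {..<c}"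
        hence J: "Sblock r b \<subseteq> {..<m}" using Jf by simp
        show "vnorm2 m (mat_vec m (coord_proj (B k) (Sblock r b)) x) = (\<Sum>j\<in>Sblock r b. (cmod (cinner m x (B k j)))\<^sup>2)"
        proof (rule proj_norm)
          show "finite (Sblock r b)" using J finite_subset by blast
          fix j j' assume "j \<in> Sblock r b" "j' \<in> Sblock r b"
          then show "cinner m (B k j) (B k j') = (if j = j' then 1 else 0)" using J orth[OF k] by blast
        qed
      qed
      also have "\<dots> = real (m - 1) * (\<Sum>j<m. (cmod (cinner m x (B k j)))\<^sup>2)"
        using block_cover[OF r1, of "\<lambda>j. (cmod (cinner m x (B k j)))\<^sup>2"] unfolding c_def m_def .
      also have "\<dots> = real (m - 1) * vnorm2 m x" using parseval[OF onb[OF k] xs] by simp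
      finally show ?thesis .
    qed
    have "(\<Sum>z\<in>I. vnorm2 m (mat_vec m (P z) x)) = (\<Sum>k\<in>K. \<Sum>b<c. vnorm2 m (mat_vec m (coord_proj (B k) (Sblock r b)) x))"
      unfolding I_def P_def by (simp add: sum.cartesian_product split_def)
    also have "\<dots> = (\<Sum>k\<in>K. real (m - 1) * vnorm2 m x)" by (rule sum.cong[OF refl]) (rule inner)
    also have "\<dots> = A * vnorm2 m x" unfolding A_def by simp
    finally show ?thesis .
  qed
  have tight: "tight_fusion_frame (fld isreal) m l I P"
    unfolding tight_fusion_frame_def using finI isp Apos normsum by blast
  have ff: "fusion_frame (fld isreal) m l I P"
    unfolding fusion_frame_def using finI isp Apos normsum by (intro conjI exI[of _ A]) auto
  have lm: "(real l)^2 / real m = real l / 2" using ml l1 by (simp add: power2_eq_square)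
  have trbound: "trprod m (P z) (P z') \<le> (real l)^2 / real m" if zz: "z \<in> I" "z' \<in> I" "z \<noteq> z'" for z z'
  proof -
    obtain k b where z: "z = (k, b)" "k \<in> K" "b < c" using zz(1) unfolding I_def by auto
    obtain k' b' where z': "z' = (k', b')" "k' \<in> K" "b' < c" using zz(2) unfolding I_def by auto
    have tr: "trprod m (P z) (P z') = (\<Sum>j\<in>Sblock r b. \<Sum>j'\<in>Sblock r b'. (cmod (cinner m (B k j) (B k' j')))\<^sup>2)"
      unfolding P_def z(1) z'(1) by (simp add: trprod_proj)
    show ?thesis
    proof (cases "k = k'")
      case True
      hence bb: "b \<noteq> b'" using zz(3) z z' by auto
      have "trprod m (P z) (P z') = (\<Sum>j\<in>Sblock r b. \<Sum>j'\<in>Sblock r b'. if j' = j then 1 else 0)"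
        unfolding tr True using Jf[OF z(3)] Jf[OF z'(3)] orth[OF z'(2)]
        by (intro sum.cong refl) (auto simp: subset_iff)
      also have "\<dots> = (\<Sum>j\<in>Sblock r b. if j \<in> Sblock r b' then 1 else 0)"
        using finJ[of b'] by (intro sum.cong refl) auto
      also have "\<dots> = real (card (Sblock r b \<inter> Sblock r b'))"
        using finJ[of b] by (subst sum.inter_restrict[symmetric]) auto
      finally have e: "trprod m (P z) (P z') = real (card (Sblock r b \<inter> Sblock r b'))" .
      have "4 * card (Sblock r b \<inter> Sblock r b') \<le> m"
        using block_pairs[OF r1, of b b'] z(3) z'(3) bb unfolding c_def m_def by simp
      hence cb: "real (card (Sblock r b \<inter> Sblock r b')) \<le> real l / 2" using ml by simp
      show ?thesis unfolding e lm by (rule cb)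
    next
      case False
      have "trprod m (P z) (P z') = (\<Sum>j\<in>Sblock r b. \<Sum>j'\<in>Sblock r b'. 1 / real m)"
        unfolding tr using Jf[OF z(3)] Jf[OF z'(3)] mub[OF z(2) z'(2) False]
        unfolding mutually_unbiased_def by (intro sum.cong refl) (auto simp: subset_iff)
      also have "\<dots> = (real l)^2 / real m" using Jf[OF z(3)] Jf[OF z'(3)] by (simp add: power2_eq_square)
      finally show ?thesis by simp
    qed
  qed
  have trattain: "trprod m (P (k, 0)) (P (k', 0)) = (real l)^2 / real m" if "k \<in> K" "k' \<in> K" "k \<noteq> k'" for k k'
  proof -
    have c0: "0 < c" using c2 by simp
    have "trprod m (P (k, 0)) (P (k', 0)) = (\<Sum>j\<in>Sblock r 0. \<Sum>j'\<in>Sblock r 0. (cmod (cinner m (B k j) (B k' j')))\<^sup>2)"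
      unfolding P_def by (simp add: trprod_proj)
    also have "\<dots> = (\<Sum>j\<in>Sblock r 0. \<Sum>j'\<in>Sblock r 0. 1 / real m)"
      using Jf[OF c0] mub[OF that] unfolding mutually_unbiased_def
      by (intro sum.cong refl) (auto simp: subset_iff)
    also have "\<dots> = (real l)^2 / real m" using Jf[OF c0] by (simp add: power2_eq_square)
    finally show ?thesis .
  qed
  obtain k0 where k0: "k0 \<in> K" using cK2 by fastforce
  have "card (K - {k0}) \<ge> 1" using cK2 k0 finK by simp
  hence "K - {k0} \<noteq> {}" by (metis card.empty not_one_le_zero)
  then obtain k1 where k1: "k1 \<in> K - {k0}" by blast
  have k01: "k0 \<in> K" "k1 \<in> K" "k0 \<noteq> k1" using k0 k1 by auto
  have finS: "finite {trprod m (P j) (P k) | j k. j \<in> I \<and> k \<in> I \<and> j \<noteq> k}"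
  proof -
    have "{trprod m (P j) (P k) | j k. j \<in> I \<and> k \<in> I \<and> j \<noteq> k} \<subseteq> (\<lambda>(j, k). trprod m (P j) (P k)) ` (I \<times> I)"
      by auto
    thus ?thesis using finI finite_subset by blast
  qed
  have mc: "max_corr m I P = (real l)^2 / real m"
    unfolding max_corr_def
  proof (rule Max_eqI[OF finS])
    fix y assume "y \<in> {trprod m (P j) (P k) | j k. j \<in> I \<and> k \<in> I \<and> j \<noteq> k}"
    then show "y \<le> (real l)^2 / real m" using trbound by auto
  next
    have "(k0, 0) \<in> I" "(k1, 0) \<in> I" using k01 c2 unfolding I_def by auto
    then show "(real l)^2 / real m \<in> {trprod m (P j) (P k) | j k. j \<in> I \<and> k \<in> I \<and> j \<noteq> k}"
      using trattain[OF k01] k01(3) by (intro CollectI exI[of _ "(k0, 0)"] exI[of _ "(k1, 0)"]) simp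
  qed
  have grass: "grassmannian (fld isreal) m l I P"
    unfolding grassmannian_def
  proof (intro conjI allI impI)
    show "fusion_frame (fld isreal) m l I P" by (rule ff)
    fix Q assume Q: "fusion_frame (fld isreal) m l {..<card I} Q"
    have Qp: "\<forall>j<card I. is_proj (fld isreal) m l (Q j)" using Q unfolding fusion_frame_def by auto
    obtain j k where jk: "j < card I" "k < card I" "j \<noteq> k" "trprod m (Q j) (Q k) \<ge> (real l)^2 / real m"
      using orthoplex_lower[OF mpos conjunct2[OF ca] Qp] by blast
    have finQ: "finite {trprod m (Q j) (Q k) | j k. j \<in> {..<card I} \<and> k \<in> {..<card I} \<and> j \<noteq> k}"
    proof -
      have "{trprod m (Q j) (Q k) | j k. j \<in> {..<card I} \<and> k \<in> {..<card I} \<and> j \<noteq> k}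
          \<subseteq> (\<lambda>(j, k). trprod m (Q j) (Q k)) ` ({..<card I} \<times> {..<card I})"
        by auto
      thus ?thesis using finite_subset by blast
    qed
    have "trprod m (Q j) (Q k) \<le> max_corr m {..<card I} Q"
      unfolding max_corr_def by (rule Max_ge[OF finQ]) (use jk in auto)
    then show "max_corr m I P \<le> max_corr m {..<card I} Q" using mc jk(4) by simp
  qed
  have mo: "maximal_orthoplectic isreal m l I P"
    unfolding maximal_orthoplectic_def orthoplex_bound_achieving_def
    using grass ca mc by simp
  show ?thesis
    using tight mo unfolding m_def I_def P_def c_def by blast
qed

end
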